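(* Let $I(k)$ be the number of countable $C_{n,m}$-homogeneous linear orderings (up to isomorphism) with $n+m+1=k$, $n,m$ finite, and let $L(k)$ be the number of countable homogeneous colored linear orderings in $k$ colors (up to isomorphism). Then $I(k)=O(k!\,2.123^k)$; in particular $\lim_{k\to\infty}\frac{I(k)}{L(k)}=0$.
   Context: For a linear ordering, $x\sim_1y$ iff only finitely many elements lie between $x$ and $y$. For $i\in\omega$: $S_i(x)$ holds iff $x$ has exactly $i$ successors (exactly $i$ elements $y>x$ with $y\sim_1x$); $P_j(x)$ iff $x$ has exactly $j$ predecessors; $Adj_k(x,y)$ iff exactly $k$ elements lie strictly between $x$ and $y$. A linear ordering is $C_{n,m}$-homogeneous if its expansion by $\{S_i\}_{i<n}$, $\{P_j\}_{j<m}$, $\{Adj_k\}_{k<n+m}$ is homogeneous (every isomorphism between finite substructures extends to an automorphism); the number of such countable orderings depends only on $n+m+1$. A colored linear ordering in $k$ colors is a linear ordering with $k$ fixed labeled unary predicates partitioning it; it is homogeneous if every isomorphism between finite substructures extends to an automorphism. *)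

theory Defs
  imports Complex_Main
begin

text \<open>Countable structures are represented on carriers A :: nat set (every countable
  linear ordering is isomorphic to one of these). lt is the strict order.\<close>

definition lin_on :: "nat set \<Rightarrow> (nat \<Rightarrow> nat \<Rightarrow> bool) \<Rightarrow> bool" where
  "lin_on A lt \<longleftrightarrow>
     (\<forall>x\<in>A. \<not> lt x x) \<and>
     (\<forall>x\<in>A. \<forall>y\<in>A. \<forall>z\<in>A. lt x y \<and> lt y z \<longrightarrow> lt x z) \<and>
     (\<forall>x\<in>A. \<forall>y\<in>A. x \<noteq> y \<longrightarrow> lt x y \<or> lt y x)"

definition order_aut :: "nat set \<Rightarrow> (nat \<Rightarrow> nat \<Rightarrow> bool) \<Rightarrow> (nat \<Rightarrow> nat) \<Rightarrow> bool" where
  "order_aut A lt g \<longleftrightarrow> bij_betw g A A \<and> (\<forall>x\<in>A. \<forall>y\<in>A. lt x y \<longleftrightarrow> lt (g x) (g y))"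

definition betw :: "nat set \<Rightarrow> (nat \<Rightarrow> nat \<Rightarrow> bool) \<Rightarrow> nat \<Rightarrow> nat \<Rightarrow> nat set" where
  "betw A lt x y = {z\<in>A. (lt x z \<and> lt z y) \<or> (lt y z \<and> lt z x)}"

definition sim1 :: "nat set \<Rightarrow> (nat \<Rightarrow> nat \<Rightarrow> bool) \<Rightarrow> nat \<Rightarrow> nat \<Rightarrow> bool" where
  "sim1 A lt x y \<longleftrightarrow> finite (betw A lt x y)"

definition has_exactly :: "nat set \<Rightarrow> nat \<Rightarrow> bool" where
  "has_exactly X i \<longleftrightarrow> finite X \<and> card X = i"

definition Spred :: "nat set \<Rightarrow> (nat \<Rightarrow> nat \<Rightarrow> bool) \<Rightarrow> nat \<Rightarrow> nat \<Rightarrow> bool" where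
  "Spred A lt i x \<longleftrightarrow> has_exactly {y\<in>A. lt x y \<and> sim1 A lt y x} i"

definition Ppred :: "nat set \<Rightarrow> (nat \<Rightarrow> nat \<Rightarrow> bool) \<Rightarrow> nat \<Rightarrow> nat \<Rightarrow> bool" where
  "Ppred A lt j x \<longleftrightarrow> has_exactly {y\<in>A. lt y x \<and> sim1 A lt y x} j"

definition Adj :: "nat set \<Rightarrow> (nat \<Rightarrow> nat \<Rightarrow> bool) \<Rightarrow> nat \<Rightarrow> nat \<Rightarrow> nat \<Rightarrow> bool" where
  "Adj A lt k x y \<longleftrightarrow> has_exactly (betw A lt x y) k"

text \<open>C_{n,m}-homogeneity: every isomorphism between finite substructures of the expansion
  by S_i (i<n), P_j (j<m), Adj_k (k<n+m) extends to an automorphism (order automorphisms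
  automatically preserve these definable predicates).\<close>
definition cnm_homogeneous :: "nat \<Rightarrow> nat \<Rightarrow> nat set \<Rightarrow> (nat \<Rightarrow> nat \<Rightarrow> bool) \<Rightarrow> bool" where
  "cnm_homogeneous n m A lt \<longleftrightarrow>
     (\<forall>D p. finite D \<and> D \<subseteq> A \<and> inj_on p D \<and> p ` D \<subseteq> A \<and>
        (\<forall>x\<in>D. \<forall>y\<in>D. lt x y \<longleftrightarrow> lt (p x) (p y)) \<and>
        (\<forall>i<n. \<forall>x\<in>D. Spred A lt i x \<longleftrightarrow> Spred A lt i (p x)) \<and>
        (\<forall>j<m. \<forall>x\<in>D. Ppred A lt j x \<longleftrightarrow> Ppred A lt j (p x)) \<and>
        (\<forall>k<n+m. \<forall>x\<in>D. \<forall>y\<in>D. Adj A lt k x y \<longleftrightarrow> Adj A lt k (p x) (p y))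
      \<longrightarrow> (\<exists>g. order_aut A lt g \<and> (\<forall>x\<in>D. g x = p x)))"

definition order_iso :: "nat set \<times> (nat \<Rightarrow> nat \<Rightarrow> bool) \<Rightarrow> nat set \<times> (nat \<Rightarrow> nat \<Rightarrow> bool) \<Rightarrow> bool" where
  "order_iso X Y \<longleftrightarrow> (\<exists>f. bij_betw f (fst X) (fst Y) \<and>
      (\<forall>x\<in>fst X. \<forall>y\<in>fst X. snd X x y \<longleftrightarrow> snd Y (f x) (f y)))"

definition iso_classes :: "'s set \<Rightarrow> ('s \<Rightarrow> 's \<Rightarrow> bool) \<Rightarrow> 's set set" where
  "iso_classes S eqv = {C. \<exists>X\<in>S. C = {Y\<in>S. eqv X Y}}"

definition CNM_orders :: "nat \<Rightarrow> nat \<Rightarrow> (nat set \<times> (nat \<Rightarrow> nat \<Rightarrow> bool)) set" where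
  "CNM_orders n m = {(A, lt). lin_on A lt \<and> cnm_homogeneous n m A lt}"

definition I_count :: "nat \<Rightarrow> nat \<Rightarrow> nat" where
  "I_count n m = card (iso_classes (CNM_orders n m) order_iso)"

text \<open>Colored linear orderings in k colors: colour function col with colours 0..k-1,
  each colour class nonempty (partition).\<close>
type_synonym cstruct = "nat set \<times> (nat \<Rightarrow> nat \<Rightarrow> bool) \<times> (nat \<Rightarrow> nat)"

definition colored_lin :: "nat \<Rightarrow> cstruct \<Rightarrow> bool" where
  "colored_lin k X \<longleftrightarrow> (case X of (A, lt, col) \<Rightarrow>
     lin_on A lt \<and> col ` A = {..<k})"

definition colored_homogeneous :: "cstruct \<Rightarrow> bool" where
  "colored_homogeneous X \<longleftrightarrow> (case X of (A, lt, col) \<Rightarrow>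
     (\<forall>D p. finite D \<and> D \<subseteq> A \<and> inj_on p D \<and> p ` D \<subseteq> A \<and>
        (\<forall>x\<in>D. \<forall>y\<in>D. lt x y \<longleftrightarrow> lt (p x) (p y)) \<and>
        (\<forall>x\<in>D. col (p x) = col x)
      \<longrightarrow> (\<exists>g. order_aut A lt g \<and> (\<forall>x\<in>A. col (g x) = col x) \<and> (\<forall>x\<in>D. g x = p x))))"

definition colored_iso :: "cstruct \<Rightarrow> cstruct \<Rightarrow> bool" where
  "colored_iso X Y \<longleftrightarrow> (case X of (A, lt, col) \<Rightarrow> case Y of (B, lt', col') \<Rightarrow>
     (\<exists>f. bij_betw f A B \<and> (\<forall>x\<in>A. \<forall>y\<in>A. lt x y \<longleftrightarrow> lt' (f x) (f y)) \<and>
          (\<forall>x\<in>A. col' (f x) = col x)))"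

definition L_count :: "nat \<Rightarrow> nat" where
  "L_count k = card (iso_classes {X. colored_lin k X \<and> colored_homogeneous X} colored_iso)"

definition CNM_classes :: "nat \<Rightarrow> nat \<Rightarrow> (nat set \<times> (nat \<Rightarrow> nat \<Rightarrow> bool)) set set" where
  "CNM_classes n m = iso_classes (CNM_orders n m) order_iso"

definition colored_classes :: "nat \<Rightarrow> cstruct set set" where
  "colored_classes k = iso_classes {X. colored_lin k X \<and> colored_homogeneous X} colored_iso"

end

theory Submission
  imports Defs "HOL-Combinatorics.Permutations" "HOL-Library.FuncSet"
begin

definition hom :: "nat set \<Rightarrow> (nat \<Rightarrow> nat \<Rightarrow> 'c) \<Rightarrow> bool" where
  "hom A tp \<longleftrightarrow> (\<forall>D p. finite D \<and> D \<subseteq> A \<and> inj_on p D \<and> p ` D \<subseteq> A \<and>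
      (\<forall>x\<in>D. \<forall>y\<in>D. tp (p x) (p y) = tp x y) \<longrightarrow>
      (\<exists>g. bij_betw g A A \<and> (\<forall>x\<in>A. \<forall>y\<in>A. tp (g x) (g y) = tp x y) \<and> (\<forall>x\<in>D. g x = p x)))"

definition emb_all :: "nat set \<Rightarrow> (nat \<Rightarrow> nat \<Rightarrow> 'c) \<Rightarrow> nat set \<Rightarrow> (nat \<Rightarrow> nat \<Rightarrow> 'c) \<Rightarrow> bool" where
  "emb_all A tpA B tpB \<longleftrightarrow> (\<forall>E. finite E \<and> E \<subseteq> A \<longrightarrow>
      (\<exists>h. inj_on h E \<and> h ` E \<subseteq> B \<and> (\<forall>x\<in>E. \<forall>y\<in>E. tpB (h x) (h y) = tpA x y)))"

definition piso :: "nat set \<Rightarrow> (nat \<Rightarrow> nat \<Rightarrow> 'c) \<Rightarrow> nat set \<Rightarrow> (nat \<Rightarrow> nat \<Rightarrow> 'c) \<Rightarrow> (nat \<times> nat) set \<Rightarrow> bool" where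
  "piso A tpA B tpB P \<longleftrightarrow> finite P \<and> P \<subseteq> A \<times> B \<and>
     (\<forall>x y x' y'. (x,y) \<in> P \<longrightarrow> (x',y') \<in> P \<longrightarrow> tpB y y' = tpA x x' \<and> (x = x' \<longleftrightarrow> y = y'))"

lemma pisoD1: "piso A tpA B tpB P \<Longrightarrow> (x,y) \<in> P \<Longrightarrow> (x',y') \<in> P \<Longrightarrow> tpB y y' = tpA x x'"
  unfolding piso_def by blast
lemma pisoD2: "piso A tpA B tpB P \<Longrightarrow> (x,y) \<in> P \<Longrightarrow> (x',y') \<in> P \<Longrightarrow> x = x' \<longleftrightarrow> y = y'"
  unfolding piso_def by blast
lemma pisoD3: "piso A tpA B tpB P \<Longrightarrow> finite P"
  unfolding piso_def by blast
lemma pisoD4: "piso A tpA B tpB P \<Longrightarrow> P \<subseteq> A \<times> B"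
  unfolding piso_def by blast
lemma pisoI: "finite P \<Longrightarrow> P \<subseteq> A \<times> B \<Longrightarrow>
   (\<And>x y x' y'. (x,y) \<in> P \<Longrightarrow> (x',y') \<in> P \<Longrightarrow> tpB y y' = tpA x x' \<and> (x = x' \<longleftrightarrow> y = y'))
   \<Longrightarrow> piso A tpA B tpB P"
proof -
  assume 1: "finite P" and 2: "P \<subseteq> A \<times> B" and
    3: "\<And>x y x' y'. (x,y) \<in> P \<Longrightarrow> (x',y') \<in> P \<Longrightarrow> tpB y y' = tpA x x' \<and> (x = x' \<longleftrightarrow> y = y')"
  have "\<forall>x y x' y'. (x,y) \<in> P \<longrightarrow> (x',y') \<in> P \<longrightarrow> tpB y y' = tpA x x' \<and> (x = x' \<longleftrightarrow> y = y')"
    by (intro allI impI, rule 3)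
  then show ?thesis unfolding piso_def using 1 2 by (intro conjI)
qed

lemma homD:
  assumes "hom A tp" "finite D" "D \<subseteq> A" "inj_on p D" "p ` D \<subseteq> A"
    "\<And>x y. x\<in>D \<Longrightarrow> y\<in>D \<Longrightarrow> tp (p x) (p y) = tp x y"
  shows "\<exists>g. bij_betw g A A \<and> (\<forall>x\<in>A. \<forall>y\<in>A. tp (g x) (g y) = tp x y) \<and> (\<forall>x\<in>D. g x = p x)"
  using assms(1) unfolding hom_def
  apply -
  apply (drule spec[of _ D])
  apply (drule spec[of _ p])
  apply (erule mp)
  using assms(2-6) by auto

lemma emb_allD:
  assumes "emb_all A tpA B tpB" "finite E" "E \<subseteq> A"
  obtains h where "inj_on h E" "h ` E \<subseteq> B" "\<And>x y. x\<in>E \<Longrightarrow> y\<in>E \<Longrightarrow> tpB (h x) (h y) = tpA x y"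
proof -
  have "\<exists>h. inj_on h E \<and> h ` E \<subseteq> B \<and> (\<forall>x\<in>E. \<forall>y\<in>E. tpB (h x) (h y) = tpA x y)"
    using assms(1) unfolding emb_all_def
    apply -
    apply (drule spec[of _ E])
    apply (erule mp)
    using assms(2,3) by simp
  then obtain h where "inj_on h E" "h ` E \<subseteq> B" "\<forall>x\<in>E. \<forall>y\<in>E. tpB (h x) (h y) = tpA x y" by blast
  then show ?thesis using that by simp
qed

lemma forth:
  assumes hB: "hom B tpB" and em: "emb_all A tpA B tpB" and P: "piso A tpA B tpB P" and a: "a \<in> A"
  shows "\<exists>b\<in>B. piso A tpA B tpB (insert (a,b) P)"
proof -
  define D where "D = fst ` P"
  define f where "f = (\<lambda>x. SOME y. (x,y) \<in> P)"
  have Pf: "(x, f x) \<in> P" if "x \<in> D" for x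
    using that unfolding D_def f_def by (auto intro: someI)
  have Pu: "y = f x" if "(x,y) \<in> P" for x y
  proof -
    have "x \<in> D" using that unfolding D_def by force
    then have "(x, f x) \<in> P" by (rule Pf)
    with that pisoD2[OF P] show ?thesis by blast
  qed
  have finD: "finite D" using pisoD3[OF P] unfolding D_def by auto
  have DA: "D \<subseteq> A" using pisoD4[OF P] unfolding D_def by auto
  have fB: "f x \<in> B" if "x \<in> D" for x using Pf[OF that] pisoD4[OF P] by auto
  have ftp: "tpB (f x) (f y) = tpA x y" if "x \<in> D" "y \<in> D" for x y
    using pisoD1[OF P Pf[OF that(1)] Pf[OF that(2)]] .
  have finj: "f x = f y \<Longrightarrow> x = y" if "x \<in> D" "y \<in> D" for x y
    using pisoD2[OF P Pf[OF that(1)] Pf[OF that(2)]] by simp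
  have EA: "insert a D \<subseteq> A" using DA a by simp
  obtain h where hinj: "inj_on h (insert a D)" and hB': "h ` insert a D \<subseteq> B"
    and htp: "\<And>x y. x\<in>insert a D \<Longrightarrow> y\<in>insert a D \<Longrightarrow> tpB (h x) (h y) = tpA x y"
    using emb_allD[OF em _ EA] finD by blast
  have hinjD: "inj_on h D" using hinj by (rule inj_on_subset) auto
  define q where "q = (\<lambda>z. f (inv_into D h z))"
  have qh: "q (h x) = f x" if "x \<in> D" for x
    unfolding q_def using inv_into_f_f[OF hinjD that] by simp
  have "\<exists>g. bij_betw g B B \<and> (\<forall>x\<in>B. \<forall>y\<in>B. tpB (g x) (g y) = tpB x y) \<and> (\<forall>x\<in>h ` D. g x = q x)"
  proof (rule homD[OF hB])
    show "finite (h ` D)" using finD by simp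
    show "h ` D \<subseteq> B" using hB' by auto
    show "inj_on q (h ` D)"
    proof (rule inj_onI)
      fix u v assume "u \<in> h ` D" "v \<in> h ` D" "q u = q v"
      then obtain x y where "x \<in> D" "y \<in> D" "u = h x" "v = h y" "f x = f y" using qh by auto
      then show "u = v" using finj by auto
    qed
    show "q ` h ` D \<subseteq> B" using fB qh by auto
    show "tpB (q x) (q y) = tpB x y" if hx: "x \<in> h ` D" and hy: "y \<in> h ` D" for x y
    proof -
      obtain x0 where x0: "x0 \<in> D" "x = h x0" using hx by blast
      obtain y0 where y0: "y0 \<in> D" "y = h y0" using hy by blast
      show ?thesis using x0 y0 using qh ftp htp by simp
    qed
  qed
  then obtain g where gb: "bij_betw g B B" and gtp: "\<forall>x\<in>B. \<forall>y\<in>B. tpB (g x) (g y) = tpB x y"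
    and gq: "\<forall>x\<in>h ` D. g x = q x" by blast
  have gh: "g (h x) = f x" if "x \<in> D" for x using gq qh that by auto
  define b where "b = g (h a)"
  have haB: "h a \<in> B" using hB' by auto
  have bB: "b \<in> B" unfolding b_def using gb haB bij_betwE by blast
  have hxB: "h x \<in> B" if "x \<in> D" for x using hB' that by auto
  have ginj: "inj_on g B" using gb bij_betw_def by blast
  have key: "tpB b (f x) = tpA a x \<and> tpB (f x) b = tpA x a \<and> (a = x \<longleftrightarrow> b = f x)" if "x \<in> D" for x
  proof -
    have "tpB b (f x) = tpB (g (h a)) (g (h x))" using gh that b_def by simp
    also have "\<dots> = tpB (h a) (h x)" using gtp haB hxB[OF that] by simp
    also have "\<dots> = tpA a x" using htp that by simp
    finally have t1: "tpB b (f x) = tpA a x" .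
    have "tpB (f x) b = tpB (g (h x)) (g (h a))" using gh that b_def by simp
    also have "\<dots> = tpB (h x) (h a)" using gtp haB hxB[OF that] by simp
    also have "\<dots> = tpA x a" using htp that by simp
    finally have t2: "tpB (f x) b = tpA x a" .
    have "a = x \<longleftrightarrow> b = f x"
    proof
      assume "a = x" then show "b = f x" using gh that b_def by simp
    next
      assume "b = f x"
      then have "g (h a) = g (h x)" using gh that b_def by simp
      then have "h a = h x" using inj_onD[OF ginj _ haB hxB[OF that]] by simp
      then show "a = x" using inj_onD[OF hinj] that by simp
    qed
    then show ?thesis using t1 t2 by blast
  qed
  have bb: "tpB b b = tpA a a" using gtp haB htp b_def by simp
  have inD: "x \<in> D" if "(x,y) \<in> P" for x y using that unfolding D_def by force
  have main: "tpB y y' = tpA x x' \<and> (x = x' \<longleftrightarrow> y = y')"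
    if 1: "(x, y) \<in> insert (a, b) P" and 2: "(x', y') \<in> insert (a, b) P" for x y x' y'
    using 1 2
  proof (elim insertE)
    assume "(x, y) = (a, b)" "(x', y') = (a, b)" then show ?thesis using bb by simp
  next
    assume A1: "(x, y) = (a, b)" and A2: "(x', y') \<in> P"
    then show ?thesis using key[OF inD[OF A2]] Pu[OF A2] by auto
  next
    assume A1: "(x, y) \<in> P" and A2: "(x', y') = (a, b)"
    then show ?thesis using key[OF inD[OF A1]] Pu[OF A1] by auto
  next
    assume "(x, y) \<in> P" "(x', y') \<in> P"
    then show ?thesis using pisoD1[OF P] pisoD2[OF P] by blast
  qed
  have fin: "finite (insert (a, b) P)" using pisoD3[OF P] by simp
  have sub: "insert (a, b) P \<subseteq> A \<times> B" using pisoD4[OF P] a bB by simp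
  show ?thesis using pisoI[OF fin sub main] bB by blast
qed

lemma piso_conv: "piso A tpA B tpB P \<Longrightarrow> piso B tpB A tpA (P\<inverse>)"
proof -
  assume P: "piso A tpA B tpB P"
  show ?thesis
  proof (rule pisoI)
    show "finite (P\<inverse>)" using pisoD3[OF P] by simp
    show "P\<inverse> \<subseteq> B \<times> A" using pisoD4[OF P] by auto
    fix x y x' y' assume "(x,y) \<in> P\<inverse>" "(x',y') \<in> P\<inverse>"
    then have "(y,x) \<in> P" "(y',x') \<in> P" by auto
    then show "tpA y y' = tpB x x' \<and> (x = x' \<longleftrightarrow> y = y')"
      using pisoD1[OF P] pisoD2[OF P] by metis
  qed
qed

lemma back_step:
  assumes hA: "hom A tpA" and em: "emb_all B tpB A tpA" and P: "piso A tpA B tpB P" and b: "b \<in> B"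
  shows "\<exists>a\<in>A. piso A tpA B tpB (insert (a,b) P)"
proof -
  obtain a where a: "a \<in> A" and Q: "piso B tpB A tpA (insert (b,a) (P\<inverse>))"
    using forth[OF hA em piso_conv[OF P] b] by blast
  have "(insert (b,a) (P\<inverse>))\<inverse> = insert (a,b) P" by auto
  then show ?thesis using piso_conv[OF Q] a by metis
qed

lemma step_ex:
  assumes hA: "hom A tpA" and hB: "hom B tpB" and e1: "emb_all A tpA B tpB" and e2: "emb_all B tpB A tpA"
    and P: "piso A tpA B tpB P"
  shows "\<exists>Q. P \<subseteq> Q \<and> piso A tpA B tpB Q \<and> (i \<in> A \<longrightarrow> i \<in> Domain Q) \<and> (i \<in> B \<longrightarrow> i \<in> Range Q)"
proof -
  obtain P1 where P1: "P \<subseteq> P1" "piso A tpA B tpB P1" "i \<in> A \<longrightarrow> i \<in> Domain P1"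
  proof (cases "i \<in> A")
    case True
    then obtain b where "b \<in> B" "piso A tpA B tpB (insert (i,b) P)" using forth[OF hB e1 P] by blast
    then show ?thesis using that[of "insert (i,b) P"] by auto
  next
    case False
    then show ?thesis using that[of P] P by auto
  qed
  obtain P2 where P2: "P1 \<subseteq> P2" "piso A tpA B tpB P2" "i \<in> B \<longrightarrow> i \<in> Range P2"
  proof (cases "i \<in> B")
    case True
    then obtain a where "a \<in> A" "piso A tpA B tpB (insert (a,i) P1)" using back_step[OF hA e2 P1(2)] by blast
    then show ?thesis using that[of "insert (a,i) P1"] by auto
  next
    case False
    then show ?thesis using that[of P1] P1 by auto
  qed
  show ?thesis
    apply (rule exI[of _ P2])
    using P1 P2 by (auto simp: Domain_mono)
qed

theorem bnf_iso:
  assumes hA: "hom A tpA" and hB: "hom B tpB" and e1: "emb_all A tpA B tpB" and e2: "emb_all B tpB A tpA"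
  shows "\<exists>f. bij_betw f A B \<and> (\<forall>x\<in>A. \<forall>y\<in>A. tpB (f x) (f y) = tpA x y)"
proof -
  define stp where "stp = (\<lambda>P i. SOME Q. P \<subseteq> Q \<and> piso A tpA B tpB Q \<and> (i \<in> A \<longrightarrow> i \<in> Domain Q) \<and> (i \<in> B \<longrightarrow> i \<in> Range Q))"
  define ch where "ch = (\<lambda>n. rec_nat {} (\<lambda>i P. stp P i) n)"
  have ch0: "ch 0 = {}" unfolding ch_def by simp
  have chS: "ch (Suc i) = stp (ch i) i" for i unfolding ch_def by simp
  have stpP: "P \<subseteq> stp P i \<and> piso A tpA B tpB (stp P i) \<and> (i \<in> A \<longrightarrow> i \<in> Domain (stp P i)) \<and> (i \<in> B \<longrightarrow> i \<in> Range (stp P i))"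
    if "piso A tpA B tpB P" for P i
    unfolding stp_def by (rule someI_ex, rule step_ex[OF hA hB e1 e2 that])
  have pch: "piso A tpA B tpB (ch i)" for i
  proof (induction i)
    case 0
    show ?case unfolding ch0 by (rule pisoI) auto
  next
    case (Suc i)
    then show ?case using stpP chS by metis
  qed
  have chmono: "ch i \<subseteq> ch (Suc i)" for i using stpP[OF pch] chS by metis
  have chle: "ch i \<subseteq> ch j" if "i \<le> j" for i j
    using lift_Suc_mono_le[of ch, OF chmono that] .
  define R where "R = (\<Union>i. ch i)"
  have RAB: "R \<subseteq> A \<times> B" unfolding R_def using pisoD4[OF pch] by blast
  have RA: "x \<in> Domain R" if "x \<in> A" for x
  proof -
    have "x \<in> Domain (ch (Suc x))" using stpP[OF pch, of x x] chS that by metis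
    then show ?thesis unfolding R_def by blast
  qed
  have RB: "y \<in> Range R" if "y \<in> B" for y
  proof -
    have "y \<in> Range (ch (Suc y))" using stpP[OF pch, of y y] chS that by metis
    then show ?thesis unfolding R_def by blast
  qed
  have Rcommon: "\<exists>k. (x,y) \<in> ch k \<and> (x',y') \<in> ch k" if h1: "(x,y) \<in> R" and h2: "(x',y') \<in> R" for x y x' y'
  proof -
    obtain i j where "(x,y) \<in> ch i" "(x',y') \<in> ch j" using h1 h2 unfolding R_def by blast
    then have "(x,y) \<in> ch (max i j)" "(x',y') \<in> ch (max i j)" using chle[of i "max i j"] chle[of j "max i j"] by auto
    then show ?thesis by blast
  qed
  have Rtp: "tpB y y' = tpA x x'" and Rinj: "x = x' \<longleftrightarrow> y = y'" if "(x,y) \<in> R" "(x',y') \<in> R" for x y x' y'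
    using Rcommon[OF that] pisoD1[OF pch] pisoD2[OF pch] by blast+
  define f where "f = (\<lambda>x. SOME y. (x,y) \<in> R)"
  have fR: "(x, f x) \<in> R" if "x \<in> A" for x
    using RA[OF that] unfolding f_def by (auto intro: someI)
  show ?thesis
  proof (intro exI conjI)
    show "bij_betw f A B"
    proof (rule bij_betw_imageI)
      show "inj_on f A"
      proof (rule inj_onI)
        fix x x' assume "x \<in> A" "x' \<in> A" "f x = f x'"
        then show "x = x'" using Rinj[OF fR fR] by metis
      qed
      show "f ` A = B"
      proof
        show "f ` A \<subseteq> B" using fR RAB by blast
        show "B \<subseteq> f ` A"
        proof
          fix y assume "y \<in> B"
          then obtain x where xy: "(x,y) \<in> R" using RB by blast
          then have xA: "x \<in> A" using RAB by blast
          have "f x = y" using Rinj[OF xy fR[OF xA]] by simp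
          then show "y \<in> f ` A" using xA by blast
        qed
      qed
    qed
    show "\<forall>x\<in>A. \<forall>y\<in>A. tpB (f x) (f y) = tpA x y"
      using Rtp[OF fR fR] by blast
  qed
qed


lemma lin_irr: "lin_on A lt \<Longrightarrow> x \<in> A \<Longrightarrow> \<not> lt x x"
  unfolding lin_on_def by blast
lemma lin_trans: "lin_on A lt \<Longrightarrow> x \<in> A \<Longrightarrow> y \<in> A \<Longrightarrow> z \<in> A \<Longrightarrow> lt x y \<Longrightarrow> lt y z \<Longrightarrow> lt x z"
  unfolding lin_on_def by blast
lemma lin_total: "lin_on A lt \<Longrightarrow> x \<in> A \<Longrightarrow> y \<in> A \<Longrightarrow> x \<noteq> y \<Longrightarrow> lt x y \<or> lt y x"
  unfolding lin_on_def by blast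
lemma lin_asym: "lin_on A lt \<Longrightarrow> x \<in> A \<Longrightarrow> y \<in> A \<Longrightarrow> lt x y \<Longrightarrow> \<not> lt y x"
  unfolding lin_on_def by blast

lemma lin_max:
  assumes "lin_on A lt" "finite E" "E \<noteq> {}" "E \<subseteq> A"
  shows "\<exists>x\<in>E. \<forall>y\<in>E. y \<noteq> x \<longrightarrow> lt y x"
  using assms(2,3,4)
proof (induction E rule: finite_ne_induct)
  case (singleton x)
  then show ?case by auto
next
  case (insert z F)
  then obtain x where x: "x \<in> F" "\<forall>y\<in>F. y \<noteq> x \<longrightarrow> lt y x" by auto
  have xA: "x \<in> A" "z \<in> A" using insert x by auto
  have "z \<noteq> x" using insert x by auto
  then consider "lt z x" | "lt x z" using lin_total[OF assms(1) xA(2) xA(1)] by blast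
  then show ?case
  proof cases
    case 1 then show ?thesis using x by auto
  next
    case 2
    have "\<forall>y\<in>insert z F. y \<noteq> z \<longrightarrow> lt y z"
    proof (intro ballI impI)
      fix y assume "y \<in> insert z F" "y \<noteq> z"
      then have "y \<in> F" by auto
      show "lt y z"
      proof (cases "y = x")
        case True then show ?thesis using 2 by simp
      next
        case False
        then have "lt y x" using x \<open>y \<in> F\<close> by auto
        then show ?thesis using lin_trans[OF assms(1) _ xA(1) xA(2) _ 2] \<open>y \<in> F\<close> insert by auto
      qed
    qed
    then show ?thesis by blast
  qed
qed

definition tpcol :: "(nat \<Rightarrow> nat \<Rightarrow> bool) \<Rightarrow> (nat \<Rightarrow> nat) \<Rightarrow> nat \<Rightarrow> nat \<Rightarrow> bool \<times> nat" where
  "tpcol lt col x y = (lt x y, col x)"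

definition cdata :: "cstruct \<Rightarrow> (nat \<times> nat) set" where
  "cdata X = (case X of (A, lt, col) \<Rightarrow> {(col x, col y) | x y. x \<in> A \<and> y \<in> A \<and> lt x y})"

lemma colored_hom_hom:
  assumes "colored_homogeneous (A, lt, col)"
  shows "hom A (tpcol lt col)"
  unfolding hom_def
proof (intro allI impI)
  fix D p
  assume H: "finite D \<and> D \<subseteq> A \<and> inj_on p D \<and> p ` D \<subseteq> A \<and> (\<forall>x\<in>D. \<forall>y\<in>D. tpcol lt col (p x) (p y) = tpcol lt col x y)"
  have o: "\<forall>x\<in>D. \<forall>y\<in>D. lt x y \<longleftrightarrow> lt (p x) (p y)" using H unfolding tpcol_def by auto
  have c: "\<forall>x\<in>D. col (p x) = col x" using H unfolding tpcol_def by auto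
  have "\<exists>g. order_aut A lt g \<and> (\<forall>x\<in>A. col (g x) = col x) \<and> (\<forall>x\<in>D. g x = p x)"
    using assms unfolding colored_homogeneous_def
    apply simp
    apply (drule spec[of _ D])
    apply (drule spec[of _ p])
    apply (erule mp)
    using H o c by blast
  then obtain g where g: "order_aut A lt g" "\<forall>x\<in>A. col (g x) = col x" "\<forall>x\<in>D. g x = p x" by blast
  show "\<exists>g. bij_betw g A A \<and> (\<forall>x\<in>A. \<forall>y\<in>A. tpcol lt col (g x) (g y) = tpcol lt col x y) \<and> (\<forall>x\<in>D. g x = p x)"
    apply (rule exI[of _ g])
    using g unfolding order_aut_def tpcol_def by auto
qed

lemma cdata_iso:
  assumes "colored_iso (A, lt, col) (B, lt', col')"
  shows "cdata (A, lt, col) = cdata (B, lt', col')"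
proof -
  obtain f where f: "bij_betw f A B" "\<forall>x\<in>A. \<forall>y\<in>A. lt x y \<longleftrightarrow> lt' (f x) (f y)" "\<forall>x\<in>A. col' (f x) = col x"
    using assms unfolding colored_iso_def by auto
  have fB: "f x \<in> B" if "x \<in> A" for x using f(1) that bij_betwE by blast
  show ?thesis
  proof
    show "cdata (A, lt, col) \<subseteq> cdata (B, lt', col')"
    proof
      fix c assume "c \<in> cdata (A, lt, col)"
      then obtain x y where "x \<in> A" "y \<in> A" "lt x y" "c = (col x, col y)" unfolding cdata_def by auto
      then have "c = (col' (f x), col' (f y))" "f x \<in> B" "f y \<in> B" "lt' (f x) (f y)" using f fB by auto
      then show "c \<in> cdata (B, lt', col')" unfolding cdata_def by blast
    qed
    show "cdata (B, lt', col') \<subseteq> cdata (A, lt, col)"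
    proof
      fix c assume "c \<in> cdata (B, lt', col')"
      then obtain x' y' where h: "x' \<in> B" "y' \<in> B" "lt' x' y'" "c = (col' x', col' y')" unfolding cdata_def by auto
      obtain x where x: "x \<in> A" "x' = f x" using h(1) f(1) unfolding bij_betw_def by auto
      obtain y where y: "y \<in> A" "y' = f y" using h(2) f(1) unfolding bij_betw_def by auto
      have "c = (col x, col y)" "lt x y" using f x y h by auto
      then show "c \<in> cdata (A, lt, col)" unfolding cdata_def using x y by blast
    qed
  qed
qed

lemma colored_emb:
  assumes linA: "lin_on A lt" and linB: "lin_on B lt'" and cA: "col ` A = {..<k}" and cB: "col' ` B = {..<k}"
    and hB: "hom B (tpcol lt' col')" and sub: "cdata (A, lt, col) \<subseteq> cdata (B, lt', col')"
  shows "emb_all A (tpcol lt col) B (tpcol lt' col')"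
proof -
  have main: "\<forall>E. finite E \<and> E \<subseteq> A \<and> card E = n \<longrightarrow>
      (\<exists>h. inj_on h E \<and> h ` E \<subseteq> B \<and> (\<forall>x\<in>E. \<forall>y\<in>E. tpcol lt' col' (h x) (h y) = tpcol lt col x y))" for n
  proof (induction n)
    case 0
    show ?case by auto
  next
    case (Suc n)
    show ?case
    proof (intro allI impI)
      fix E assume E: "finite E \<and> E \<subseteq> A \<and> card E = Suc n"
      then have Ene: "E \<noteq> {}" by auto
      obtain x where x: "x \<in> E" "\<forall>y\<in>E. y \<noteq> x \<longrightarrow> lt y x" using lin_max[OF linA _ Ene] E by blast
      define F where "F = E - {x}"
      have F: "finite F \<and> F \<subseteq> A \<and> card F = n"
      proof -
        have e: "finite E" "E \<subseteq> A" "card E = Suc n" using E by auto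
        have "F \<subseteq> A" unfolding F_def using e(2) by blast
        moreover have "finite F" unfolding F_def using e(1) by simp
        moreover have "card F = n" unfolding F_def using e(1,3) x(1) by (simp add: card_Diff_singleton)
        ultimately show ?thesis by blast
      qed
      obtain h where h: "inj_on h F" "h ` F \<subseteq> B" "\<forall>x\<in>F. \<forall>y\<in>F. tpcol lt' col' (h x) (h y) = tpcol lt col x y"
        using Suc.IH[rule_format, OF F] by (elim exE conjE) blast
      have xA: "x \<in> A" using E x by auto
      have EF: "E = insert x F" "x \<notin> F" using x(1) unfolding F_def by auto
      have hcol: "col' (h z) = col z" if "z \<in> F" for z using h(3) that unfolding tpcol_def by auto
      have hlt: "lt' (h z) (h w) \<longleftrightarrow> lt z w" if "z \<in> F" "w \<in> F" for z w using h(3) that unfolding tpcol_def by auto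
      have FA: "z \<in> A" if "z \<in> F" for z using F that by auto
      have hFB: "h z \<in> B" if "z \<in> F" for z using h(2) that by auto
      obtain b where bB: "b \<in> B" and bcol: "col' b = col x" and blt: "\<forall>z\<in>F. lt' (h z) b"
      proof (cases "F = {}")
        case True
        have "col x \<in> col' ` B" using cA cB xA by auto
        then obtain b where "b \<in> B" "col' b = col x" by auto
        then show ?thesis using that True by auto
      next
        case False
        obtain y where y: "y \<in> F" "\<forall>z\<in>F. z \<noteq> y \<longrightarrow> lt z y" using lin_max[OF linA _ False] F by blast
        have yx: "lt y x" using x y EF by auto
        have "(col y, col x) \<in> cdata (A, lt, col)" unfolding cdata_def using yx FA[OF y(1)] xA by auto
        then have "(col y, col x) \<in> cdata (B, lt', col')" using sub by auto
        then obtain u v where uv: "u \<in> B" "v \<in> B" "lt' u v" "col' u = col y" "col' v = col x"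
          unfolding cdata_def by auto
        have "\<exists>g. bij_betw g B B \<and> (\<forall>x\<in>B. \<forall>y\<in>B. tpcol lt' col' (g x) (g y) = tpcol lt' col' x y) \<and> (\<forall>x\<in>{u}. g x = h y)"
          apply (rule homD[OF hB])
          using uv hFB[OF y(1)] hcol[OF y(1)] lin_irr[OF linB] unfolding tpcol_def by auto
        then obtain g where g: "bij_betw g B B" "\<forall>x\<in>B. \<forall>y\<in>B. tpcol lt' col' (g x) (g y) = tpcol lt' col' x y" "g u = h y"
          by blast
        have gvB: "g v \<in> B" using g(1) uv bij_betwE by blast
        have gcol: "col' (g v) = col x" using g(2) uv unfolding tpcol_def by auto
        have glt: "lt' (h y) (g v)" using g(2) g(3) uv unfolding tpcol_def by force
        have "\<forall>z\<in>F. lt' (h z) (g v)"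
        proof
          fix z assume z: "z \<in> F"
          show "lt' (h z) (g v)"
          proof (cases "z = y")
            case True then show ?thesis using glt by simp
          next
            case False
            then have "lt' (h z) (h y)" using y z hlt by auto
            then show ?thesis using lin_trans[OF linB hFB[OF z] hFB[OF y(1)] gvB _ glt] by simp
          qed
        qed
        then show ?thesis using that gvB gcol by blast
      qed
      define h' where "h' = h(x := b)"
      have h'F: "h' z = h z" if "z \<in> F" for z using that EF unfolding h'_def by auto
      have h'x: "h' x = b" unfolding h'_def by simp
      show "\<exists>h. inj_on h E \<and> h ` E \<subseteq> B \<and> (\<forall>x\<in>E. \<forall>y\<in>E. tpcol lt' col' (h x) (h y) = tpcol lt col x y)"
      proof (intro exI conjI)
        show "inj_on h' E"
        proof (rule inj_onI)
          fix z w assume z: "z \<in> E" and w: "w \<in> E" and e: "h' z = h' w"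
          show "z = w"
          proof (cases "z = x"; cases "w = x")
            assume "z = x" "w = x" then show ?thesis by simp
          next
            assume "z = x" "w \<noteq> x"
            then have "w \<in> F" using w EF by auto
            then have "lt' (h' w) (h' z)" using blt h'F h'x \<open>z = x\<close> by auto
            then show ?thesis using e lin_irr[OF linB bB] h'x \<open>z = x\<close> by auto
          next
            assume "z \<noteq> x" "w = x"
            then have "z \<in> F" using z EF by auto
            then have "lt' (h' z) (h' w)" using blt h'F h'x \<open>w = x\<close> by auto
            then show ?thesis using e lin_irr[OF linB bB] h'x \<open>w = x\<close> by auto
          next
            assume "z \<noteq> x" "w \<noteq> x"
            then have "z \<in> F" "w \<in> F" using z w EF by auto
            then show ?thesis using e h'F h(1) inj_on_def by metis
          qed
        qed
        show "h' ` E \<subseteq> B" using EF h'F h'x bB hFB by auto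
        show "\<forall>z\<in>E. \<forall>w\<in>E. tpcol lt' col' (h' z) (h' w) = tpcol lt col z w"
        proof (intro ballI)
          fix z w assume z: "z \<in> E" and w: "w \<in> E"
          show "tpcol lt' col' (h' z) (h' w) = tpcol lt col z w"
          proof (cases "z = x"; cases "w = x")
            assume "z = x" "w = x" then show ?thesis
              using h'x bcol lin_irr[OF linB bB] lin_irr[OF linA xA] unfolding tpcol_def by simp
          next
            assume zx: "z = x" and wx: "w \<noteq> x"
            then have wF: "w \<in> F" using w EF by auto
            have "lt w x" using x w wx by auto
            then have "\<not> lt x w" using lin_asym[OF linA FA[OF wF] xA] by simp
            moreover have "\<not> lt' b (h w)" using lin_asym[OF linB hFB[OF wF] bB] blt wF by simp
            ultimately show ?thesis using zx h'x h'F[OF wF] bcol unfolding tpcol_def by simp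
          next
            assume zx: "z \<noteq> x" and wx: "w = x"
            then have zF: "z \<in> F" using z EF by auto
            have "lt z x" using x z zx by auto
            then show ?thesis using wx h'x h'F[OF zF] blt zF hcol[OF zF] unfolding tpcol_def by simp
          next
            assume "z \<noteq> x" "w \<noteq> x"
            then have "z \<in> F" "w \<in> F" using z w EF by auto
            then show ?thesis using h(3) h'F by simp
          qed
        qed
      qed
    qed
  qed
  show ?thesis unfolding emb_all_def
  proof (intro allI impI)
    fix E assume E: "finite E \<and> E \<subseteq> A"
    then have "finite E \<and> E \<subseteq> A \<and> card E = card E" by simp
    from main[of "card E", rule_format, OF this]
    show "\<exists>h. inj_on h E \<and> h ` E \<subseteq> B \<and> (\<forall>x\<in>E. \<forall>y\<in>E. tpcol lt' col' (h x) (h y) = tpcol lt col x y)" .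
  qed
qed


lemma classes_via_data:
  assumes "\<And>X Y. X\<in>S \<Longrightarrow> Y\<in>S \<Longrightarrow> eqv X Y \<longleftrightarrow> dat X = dat Y"
  shows "iso_classes S eqv = (\<lambda>d. {Y\<in>S. dat Y = d}) ` (dat ` S)"
proof -
  have "{Y\<in>S. eqv X Y} = {Y\<in>S. dat Y = dat X}" if "X \<in> S" for X
    using assms that by auto
  then show ?thesis unfolding iso_classes_def by auto
qed

lemma classes_inj: "inj_on (\<lambda>d. {Y\<in>S. dat Y = d}) (dat ` S)"
proof (rule inj_onI)
  fix d1 d2 assume "d1 \<in> dat ` S" "d2 \<in> dat ` S" and e: "{Y\<in>S. dat Y = d1} = {Y\<in>S. dat Y = d2}"
  then obtain X where "X \<in> S" "dat X = d1" by auto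
  then have "X \<in> {Y\<in>S. dat Y = d2}" using e by blast
  then show "d1 = d2" using \<open>dat X = d1\<close> by simp
qed

lemma classes_card:
  assumes "\<And>X Y. X\<in>S \<Longrightarrow> Y\<in>S \<Longrightarrow> eqv X Y \<longleftrightarrow> dat X = dat Y"
  shows "card (iso_classes S eqv) = card (dat ` S)"
proof -
  have "iso_classes S eqv = (\<lambda>d. {Y\<in>S. dat Y = d}) ` (dat ` S)"
    by (rule classes_via_data, rule assms(1), assumption+)
  then show ?thesis using card_image[OF classes_inj[where dat=dat and S=S]] by simp
qed

lemma classes_finite:
  assumes "\<And>X Y. X\<in>S \<Longrightarrow> Y\<in>S \<Longrightarrow> eqv X Y \<longleftrightarrow> dat X = dat Y" "finite (dat ` S)"
  shows "finite (iso_classes S eqv)"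
proof -
  have "iso_classes S eqv = (\<lambda>d. {Y\<in>S. dat Y = d}) ` (dat ` S)"
    by (rule classes_via_data, rule assms(1), assumption+)
  then show ?thesis using assms(2) by simp
qed

definition Sk :: "nat \<Rightarrow> cstruct set" where
  "Sk k = {X. colored_lin k X \<and> colored_homogeneous X}"

lemma col_iff:
  assumes "X \<in> Sk k" "Y \<in> Sk k"
  shows "colored_iso X Y \<longleftrightarrow> cdata X = cdata Y"
proof -
  obtain A lt col where X: "X = (A, lt, col)" by (cases X) auto
  obtain B lt' col' where Y: "Y = (B, lt', col')" by (cases Y) auto
  have lA: "lin_on A lt" "col ` A = {..<k}" using assms(1) X unfolding Sk_def colored_lin_def by auto
  have lB: "lin_on B lt'" "col' ` B = {..<k}" using assms(2) Y unfolding Sk_def colored_lin_def by auto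
  have hA: "hom A (tpcol lt col)" using assms(1) X colored_hom_hom unfolding Sk_def by auto
  have hB: "hom B (tpcol lt' col')" using assms(2) Y colored_hom_hom unfolding Sk_def by auto
  show ?thesis
  proof
    assume "colored_iso X Y" then show "cdata X = cdata Y" using X Y cdata_iso by simp
  next
    assume e: "cdata X = cdata Y"
    have e1: "emb_all A (tpcol lt col) B (tpcol lt' col')"
      by (rule colored_emb[OF lA(1) lB(1) lA(2) lB(2) hB]) (use e X Y in simp)
    have e2: "emb_all B (tpcol lt' col') A (tpcol lt col)"
      by (rule colored_emb[OF lB(1) lA(1) lB(2) lA(2) hA]) (use e X Y in simp)
    obtain f where f: "bij_betw f A B" "\<forall>x\<in>A. \<forall>y\<in>A. tpcol lt' col' (f x) (f y) = tpcol lt col x y"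
      using bnf_iso[OF hA hB e1 e2] by blast
    have "\<forall>x\<in>A. \<forall>y\<in>A. lt x y \<longleftrightarrow> lt' (f x) (f y)" using f(2) unfolding tpcol_def by simp
    moreover have "\<forall>x\<in>A. col' (f x) = col x" using f(2) unfolding tpcol_def by simp
    ultimately show "colored_iso X Y" unfolding X Y colored_iso_def using f(1) by auto
  qed
qed

lemma cdata_sub: "X \<in> Sk k \<Longrightarrow> cdata X \<subseteq> {..<k} \<times> {..<k}"
proof -
  assume "X \<in> Sk k"
  moreover obtain A lt col where X: "X = (A, lt, col)" by (cases X) auto
  ultimately have "col ` A = {..<k}" unfolding Sk_def colored_lin_def by auto
  then show ?thesis unfolding X cdata_def by auto
qed

theorem colored_finite: "finite (colored_classes k)"
proof -
  have "cdata ` Sk k \<subseteq> Pow ({..<k} \<times> {..<k})" using cdata_sub by blast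
  then have "finite (cdata ` Sk k)" by (rule finite_subset) auto
  then show ?thesis unfolding colored_classes_def Sk_def[symmetric]
    by (rule classes_finite[rotated]) (rule col_iff)
qed

lemma cdata_memI: "x \<in> A \<Longrightarrow> y \<in> A \<Longrightarrow> lt x y \<Longrightarrow> (col x, col y) \<in> cdata (A, lt, col)"
  unfolding cdata_def by blast

definition Pst :: "nat \<Rightarrow> (nat \<Rightarrow> nat) \<Rightarrow> cstruct" where
  "Pst k \<pi> = ({..<k}, (<), \<pi>)"

lemma Pst_in: assumes "\<pi> permutes {..<k}" shows "Pst k \<pi> \<in> Sk k"
proof -
  have "colored_lin k (Pst k \<pi>)" unfolding Pst_def colored_lin_def lin_on_def
    using permutes_image[OF assms] by auto
  moreover have "colored_homogeneous (Pst k \<pi>)" unfolding Pst_def colored_homogeneous_def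
  proof (unfold prod.case, intro allI impI)
    fix D p assume H: "finite D \<and> D \<subseteq> {..<k} \<and> inj_on p D \<and> p ` D \<subseteq> {..<k} \<and>
       (\<forall>x\<in>D. \<forall>y\<in>D. x < y \<longleftrightarrow> p x < p y) \<and> (\<forall>x\<in>D. \<pi> (p x) = \<pi> x)"
    have "\<forall>x\<in>D. p x = x" using H permutes_inj[OF assms] unfolding inj_def by blast
    then show "\<exists>g. order_aut {..<k} (<) g \<and> (\<forall>x\<in>{..<k}. \<pi> (g x) = \<pi> x) \<and> (\<forall>x\<in>D. g x = p x)"
      by (intro exI[of _ id]) (auto simp: order_aut_def)
  qed
  ultimately show ?thesis unfolding Sk_def by simp
qed

lemma Pst_below:
  assumes "\<pi> permutes {..<k}" "c < k"
  shows "card {d. (d, c) \<in> cdata (Pst k \<pi>)} = inv \<pi> c"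
proof -
  have ic: "inv \<pi> c < k" using permutes_in_image[OF permutes_inv[OF assms(1)]] assms(2) by simp
  have "{d. (d, c) \<in> cdata (Pst k \<pi>)} = \<pi> ` {..<inv \<pi> c}"
  proof
    show "{d. (d, c) \<in> cdata (Pst k \<pi>)} \<subseteq> \<pi> ` {..<inv \<pi> c}"
    proof
      fix d assume "d \<in> {d. (d, c) \<in> cdata (Pst k \<pi>)}"
      then obtain x y where h: "x < k" "y < k" "x < y" "d = \<pi> x" "c = \<pi> y" unfolding cdata_def Pst_def by auto
      have yy: "y = inv \<pi> c" using h(5) permutes_inverses(2)[OF assms(1), of y] by simp
      have "x \<in> {..<inv \<pi> c}" using h(3) yy by simp
      then show "d \<in> \<pi> ` {..<inv \<pi> c}" using h(4) by (rule rev_image_eqI)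
    qed
    show "\<pi> ` {..<inv \<pi> c} \<subseteq> {d. (d, c) \<in> cdata (Pst k \<pi>)}"
    proof
      fix d assume "d \<in> \<pi> ` {..<inv \<pi> c}"
      then obtain x where x: "x < inv \<pi> c" "d = \<pi> x" by auto
      have cc: "c = \<pi> (inv \<pi> c)" using permutes_inverses[OF assms(1)] by simp
      have "(\<pi> x, \<pi> (inv \<pi> c)) \<in> cdata ({..<k}, (<), \<pi>)"
        by (rule cdata_memI) (use x ic in auto)
      then show "d \<in> {d. (d, c) \<in> cdata (Pst k \<pi>)}" unfolding Pst_def using cc x by simp
    qed
  qed
  moreover have "card (\<pi> ` {..<inv \<pi> c}) = inv \<pi> c"
    using card_image[OF permutes_inj_on[OF assms(1)]] by simp
  ultimately show ?thesis by simp
qed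

lemma Pst_inj: "inj_on (\<lambda>\<pi>. cdata (Pst k \<pi>)) {\<pi>. \<pi> permutes {..<k}}"
proof (rule inj_onI)
  fix \<pi> \<sigma> assume p: "\<pi> \<in> {\<pi>. \<pi> permutes {..<k}}" and s: "\<sigma> \<in> {\<pi>. \<pi> permutes {..<k}}"
    and e: "cdata (Pst k \<pi>) = cdata (Pst k \<sigma>)"
  have p': "\<pi> permutes {..<k}" and s': "\<sigma> permutes {..<k}" using p s by auto
  have "inv \<pi> c = inv \<sigma> c" for c
  proof (cases "c < k")
    case True
    then show ?thesis using Pst_below[OF p' True] Pst_below[OF s' True] e by simp
  next
    case False
    then show ?thesis using permutes_not_in[OF permutes_inv[OF p']] permutes_not_in[OF permutes_inv[OF s']] by simp
  qed
  then have "inv \<pi> = inv \<sigma>" by auto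
  then show "\<pi> = \<sigma>" using permutes_inv_inv[OF p'] permutes_inv_inv[OF s'] by metis
qed

theorem L_ge: "fact k \<le> L_count k"
proof -
  have fin: "finite (cdata ` Sk k)"
  proof -
    have "cdata ` Sk k \<subseteq> Pow ({..<k} \<times> {..<k})" using cdata_sub by blast
    then show ?thesis by (rule finite_subset) auto
  qed
  have "L_count k = card (cdata ` Sk k)" unfolding L_count_def Sk_def[symmetric]
    by (rule classes_card) (rule col_iff)
  moreover have "(\<lambda>\<pi>. cdata (Pst k \<pi>)) ` {\<pi>. \<pi> permutes {..<k}} \<subseteq> cdata ` Sk k"
    using Pst_in by blast
  then have "card ((\<lambda>\<pi>. cdata (Pst k \<pi>)) ` {\<pi>. \<pi> permutes {..<k}}) \<le> card (cdata ` Sk k)"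
    using card_mono[OF fin] by blast
  moreover have "card ((\<lambda>\<pi>. cdata (Pst k \<pi>)) ` {\<pi>. \<pi> permutes {..<k}}) = fact k"
    using card_image[OF Pst_inj] card_permutations[of "{..<k}" k] by simp
  ultimately show ?thesis by simp
qed


lemma betw_sym: "betw A lt x y = betw A lt y x"
  unfolding betw_def by auto

lemma betw_sub: "betw A lt x y \<subseteq> A"
  unfolding betw_def by auto

lemma betw_self: "lin_on A lt \<Longrightarrow> x \<in> A \<Longrightarrow> betw A lt x x = {}"
  unfolding betw_def using lin_asym by blast

lemma betw_mem: "z \<in> betw A lt x y \<longleftrightarrow> z \<in> A \<and> (lt x z \<and> lt z y \<or> lt y z \<and> lt z x)"
  unfolding betw_def by simp

lemma sim1_refl: "lin_on A lt \<Longrightarrow> x \<in> A \<Longrightarrow> sim1 A lt x x"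
  unfolding sim1_def using betw_self by simp

lemma sim1_sym: "sim1 A lt x y \<Longrightarrow> sim1 A lt y x"
  unfolding sim1_def using betw_sym by metis

lemma betw_trans_sub:
  assumes "lin_on A lt" "x \<in> A" "y \<in> A" "z \<in> A"
  shows "betw A lt x z \<subseteq> betw A lt x y \<union> betw A lt y z \<union> {y}"
proof
  fix w assume w: "w \<in> betw A lt x z"
  then have wA: "w \<in> A" by (simp add: betw_mem)
  show "w \<in> betw A lt x y \<union> betw A lt y z \<union> {y}"
  proof (cases "w = y")
    case True then show ?thesis by simp
  next
    case False
    then have "lt w y \<or> lt y w" using lin_total[OF assms(1) wA assms(3)] by blast
    then show ?thesis using w wA unfolding Un_iff betw_mem singleton_iff by blast
  qed
qed

lemma sim1_trans:
  assumes "lin_on A lt" "x \<in> A" "y \<in> A" "z \<in> A" "sim1 A lt x y" "sim1 A lt y z"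
  shows "sim1 A lt x z"
proof -
  have "finite (betw A lt x y \<union> betw A lt y z \<union> {y})" using assms(5,6) unfolding sim1_def by simp
  then show ?thesis unfolding sim1_def using betw_trans_sub[OF assms(1-4)] by (rule finite_subset[rotated])
qed

lemma betw_mono_left:
  assumes "lin_on A lt" "x \<in> A" "w \<in> A" "y \<in> A" "lt x w" "lt w y"
  shows "betw A lt w y \<subseteq> betw A lt x y" and "betw A lt x w \<subseteq> betw A lt x y"
  using assms lin_trans[OF assms(1)] unfolding betw_def by blast+

lemma sim1_conv:
  assumes "lin_on A lt" "x \<in> A" "w \<in> A" "y \<in> A" "lt x w" "lt w y" "sim1 A lt x y"
  shows "sim1 A lt x w" and "sim1 A lt w y"
  using assms betw_mono_left[OF assms(1-6)] unfolding sim1_def by (auto intro: finite_subset)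

lemma betw_split:
  assumes "lin_on A lt" "x \<in> A" "w \<in> A" "y \<in> A" "lt x w" "lt w y"
  shows "betw A lt x y = betw A lt x w \<union> {w} \<union> betw A lt w y"
proof
  show "betw A lt x y \<subseteq> betw A lt x w \<union> {w} \<union> betw A lt w y"
    using betw_trans_sub[OF assms(1-4)] by blast
  show "betw A lt x w \<union> {w} \<union> betw A lt w y \<subseteq> betw A lt x y"
  proof -
    have "w \<in> betw A lt x y" using assms unfolding betw_mem by simp
    then show ?thesis using betw_mono_left[OF assms] by blast
  qed
qed

lemma betw_split_card:
  assumes "lin_on A lt" "x \<in> A" "w \<in> A" "y \<in> A" "lt x w" "lt w y" "finite (betw A lt x y)"
  shows "card (betw A lt x y) = card (betw A lt x w) + 1 + card (betw A lt w y)"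
proof -
  have e: "betw A lt x y = betw A lt x w \<union> {w} \<union> betw A lt w y" by (rule betw_split[OF assms(1-6)])
  have f1: "finite (betw A lt x w)" "finite (betw A lt w y)" using assms(7) e by auto
  have d1: "w \<notin> betw A lt x w" "w \<notin> betw A lt w y" using lin_irr[OF assms(1)] unfolding betw_mem by auto
  have d2: "betw A lt x w \<inter> betw A lt w y = {}"
  proof (rule ccontr)
    assume "betw A lt x w \<inter> betw A lt w y \<noteq> {}"
    then obtain u where u: "u \<in> betw A lt x w" "u \<in> betw A lt w y" by blast
    then have uA: "u \<in> A" by (simp add: betw_mem)
    have "lt u w"
    proof -
      have "lt x u \<and> lt u w \<or> lt w u \<and> lt u x" using u(1) by (simp add: betw_mem)
      moreover have "\<not> (lt w u \<and> lt u x)"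
        using lin_trans[OF assms(1) assms(3) uA assms(2)] lin_asym[OF assms(1) assms(2) assms(3) assms(5)] by blast
      ultimately show ?thesis by blast
    qed
    moreover have "lt w u"
    proof -
      have "lt w u \<and> lt u y \<or> lt y u \<and> lt u w" using u(2) by (simp add: betw_mem)
      moreover have "\<not> (lt y u \<and> lt u w)"
        using lin_trans[OF assms(1) assms(4) uA assms(3)] lin_asym[OF assms(1) assms(3) assms(4) assms(6)] by blast
      ultimately show ?thesis by blast
    qed
    ultimately show False using lin_asym[OF assms(1) uA assms(3)] by blast
  qed
  have "card (betw A lt x w \<union> {w} \<union> betw A lt w y) = card (betw A lt x w \<union> {w}) + card (betw A lt w y)"
    by (rule card_Un_disjoint) (use f1 d1 d2 in auto)
  also have "card (betw A lt x w \<union> {w}) = card (betw A lt x w) + 1" using f1 d1 by simp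
  finally show ?thesis using e by simp
qed

section \<open>Order isomorphisms\<close>

definition oiso :: "nat set \<Rightarrow> (nat \<Rightarrow> nat \<Rightarrow> bool) \<Rightarrow> nat set \<Rightarrow> (nat \<Rightarrow> nat \<Rightarrow> bool) \<Rightarrow> (nat \<Rightarrow> nat) \<Rightarrow> bool" where
  "oiso A lt B lt' f \<longleftrightarrow> bij_betw f A B \<and> (\<forall>x\<in>A. \<forall>y\<in>A. lt x y \<longleftrightarrow> lt' (f x) (f y))"

lemma order_aut_oiso: "order_aut A lt g = oiso A lt A lt g"
  unfolding order_aut_def oiso_def by simp

lemma oiso_betw:
  assumes "oiso A lt B lt' f" "x \<in> A" "y \<in> A"
  shows "f ` betw A lt x y = betw B lt' (f x) (f y)"
proof
  have b: "bij_betw f A B" and o: "\<forall>x\<in>A. \<forall>y\<in>A. lt x y \<longleftrightarrow> lt' (f x) (f y)" using assms(1) unfolding oiso_def by auto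
  show "f ` betw A lt x y \<subseteq> betw B lt' (f x) (f y)"
  proof
    fix w assume "w \<in> f ` betw A lt x y"
    then obtain z where z: "z \<in> betw A lt x y" "w = f z" by auto
    then have zA: "z \<in> A" by (simp add: betw_mem)
    have "f z \<in> B" using b zA bij_betwE by blast
    then show "w \<in> betw B lt' (f x) (f y)" using z zA o assms(2,3) unfolding betw_mem by auto
  qed
  show "betw B lt' (f x) (f y) \<subseteq> f ` betw A lt x y"
  proof
    fix w assume w: "w \<in> betw B lt' (f x) (f y)"
    then have "w \<in> B" by (simp add: betw_mem)
    then obtain z where z: "z \<in> A" "w = f z" using b unfolding bij_betw_def by auto
    then have "z \<in> betw A lt x y" using w o assms(2,3) unfolding betw_mem by auto
    then show "w \<in> f ` betw A lt x y" using z by auto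
  qed
qed

lemma oiso_inj: "oiso A lt B lt' f \<Longrightarrow> inj_on f A"
  unfolding oiso_def bij_betw_def by auto

lemma oiso_in: "oiso A lt B lt' f \<Longrightarrow> x \<in> A \<Longrightarrow> f x \<in> B"
  unfolding oiso_def using bij_betwE by blast

lemma oiso_lt: "oiso A lt B lt' f \<Longrightarrow> x \<in> A \<Longrightarrow> y \<in> A \<Longrightarrow> lt' (f x) (f y) \<longleftrightarrow> lt x y"
  unfolding oiso_def by auto

lemma oiso_betw_card:
  assumes "oiso A lt B lt' f" "x \<in> A" "y \<in> A"
  shows "card (betw B lt' (f x) (f y)) = card (betw A lt x y)"
    and "finite (betw B lt' (f x) (f y)) \<longleftrightarrow> finite (betw A lt x y)"
proof -
  have i: "inj_on f (betw A lt x y)" using oiso_inj[OF assms(1)] betw_sub inj_on_subset by metis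
  show "card (betw B lt' (f x) (f y)) = card (betw A lt x y)"
    using card_image[OF i] oiso_betw[OF assms] by simp
  show "finite (betw B lt' (f x) (f y)) \<longleftrightarrow> finite (betw A lt x y)"
    using finite_image_iff[OF i] oiso_betw[OF assms] by simp
qed

lemma oiso_sim1:
  assumes "oiso A lt B lt' f" "x \<in> A" "y \<in> A"
  shows "sim1 B lt' (f x) (f y) \<longleftrightarrow> sim1 A lt x y"
  unfolding sim1_def using oiso_betw_card[OF assms] by simp

lemma oiso_Adj:
  assumes "oiso A lt B lt' f" "x \<in> A" "y \<in> A"
  shows "Adj B lt' k (f x) (f y) \<longleftrightarrow> Adj A lt k x y"
  unfolding Adj_def has_exactly_def using oiso_betw_card[OF assms] by simp

lemma oiso_image_set:
  assumes "oiso A lt B lt' f" "x \<in> A"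
    and "\<And>y. y \<in> A \<Longrightarrow> Q' (f y) \<longleftrightarrow> Q y"
  shows "f ` {y\<in>A. Q y} = {y\<in>B. Q' y}"
proof
  show "f ` {y\<in>A. Q y} \<subseteq> {y\<in>B. Q' y}" using assms oiso_in by auto
  show "{y\<in>B. Q' y} \<subseteq> f ` {y\<in>A. Q y}"
  proof
    fix w assume w: "w \<in> {y\<in>B. Q' y}"
    then obtain z where "z \<in> A" "w = f z" using assms(1) unfolding oiso_def bij_betw_def by auto
    then show "w \<in> f ` {y\<in>A. Q y}" using w assms(3) by auto
  qed
qed

definition succs :: "nat set \<Rightarrow> (nat \<Rightarrow> nat \<Rightarrow> bool) \<Rightarrow> nat \<Rightarrow> nat set" where
  "succs A lt x = {y\<in>A. lt x y \<and> sim1 A lt y x}"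
definition preds :: "nat set \<Rightarrow> (nat \<Rightarrow> nat \<Rightarrow> bool) \<Rightarrow> nat \<Rightarrow> nat set" where
  "preds A lt x = {y\<in>A. lt y x \<and> sim1 A lt y x}"
definition cls :: "nat set \<Rightarrow> (nat \<Rightarrow> nat \<Rightarrow> bool) \<Rightarrow> nat \<Rightarrow> nat set" where
  "cls A lt x = {y\<in>A. sim1 A lt x y}"

lemma oiso_succs: "oiso A lt B lt' f \<Longrightarrow> x \<in> A \<Longrightarrow> f ` succs A lt x = succs B lt' (f x)"
  unfolding succs_def by (rule oiso_image_set) (auto simp: oiso_lt oiso_sim1)
lemma oiso_preds: "oiso A lt B lt' f \<Longrightarrow> x \<in> A \<Longrightarrow> f ` preds A lt x = preds B lt' (f x)"
  unfolding preds_def by (rule oiso_image_set) (auto simp: oiso_lt oiso_sim1)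
lemma oiso_cls: "oiso A lt B lt' f \<Longrightarrow> x \<in> A \<Longrightarrow> f ` cls A lt x = cls B lt' (f x)"
  unfolding cls_def by (rule oiso_image_set) (auto simp: oiso_lt oiso_sim1)

lemma oiso_card_img: "oiso A lt B lt' f \<Longrightarrow> S \<subseteq> A \<Longrightarrow> card (f ` S) = card S \<and> (finite (f ` S) \<longleftrightarrow> finite S)"
  using oiso_inj card_image finite_image_iff inj_on_subset by metis

lemma succs_sub: "succs A lt x \<subseteq> A" unfolding succs_def by auto
lemma preds_sub: "preds A lt x \<subseteq> A" unfolding preds_def by auto
lemma cls_sub: "cls A lt x \<subseteq> A" unfolding cls_def by auto

lemma Spred_eq: "Spred A lt i x \<longleftrightarrow> finite (succs A lt x) \<and> card (succs A lt x) = i"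
  unfolding Spred_def succs_def has_exactly_def by simp
lemma Ppred_eq: "Ppred A lt j x \<longleftrightarrow> finite (preds A lt x) \<and> card (preds A lt x) = j"
  unfolding Ppred_def preds_def has_exactly_def by simp
lemma Adj_eq: "Adj A lt k x y \<longleftrightarrow> finite (betw A lt x y) \<and> card (betw A lt x y) = k"
  unfolding Adj_def has_exactly_def by simp

lemma oiso_Spred: "oiso A lt B lt' f \<Longrightarrow> x \<in> A \<Longrightarrow> Spred B lt' i (f x) \<longleftrightarrow> Spred A lt i x"
  unfolding Spred_eq using oiso_succs oiso_card_img succs_sub by metis
lemma oiso_Ppred: "oiso A lt B lt' f \<Longrightarrow> x \<in> A \<Longrightarrow> Ppred B lt' i (f x) \<longleftrightarrow> Ppred A lt i x"
  unfolding Ppred_eq using oiso_preds oiso_card_img preds_sub by metis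


definition tpc :: "nat \<Rightarrow> nat \<Rightarrow> nat set \<Rightarrow> (nat \<Rightarrow> nat \<Rightarrow> bool) \<Rightarrow> nat \<Rightarrow> nat \<Rightarrow>
    bool \<times> (nat \<Rightarrow> bool) \<times> (nat \<Rightarrow> bool) \<times> (nat \<Rightarrow> bool)" where
  "tpc n m A lt x y = (lt x y, \<lambda>i. i < n \<and> Spred A lt i x, \<lambda>j. j < m \<and> Ppred A lt j x, \<lambda>k. k < n + m \<and> Adj A lt k x y)"

lemma tpc_eqD:
  assumes "tpc n m A lt x y = tpc n m B lt' x' y'"
  shows "lt x y \<longleftrightarrow> lt' x' y'"
    and "\<And>i. i < n \<Longrightarrow> Spred A lt i x \<longleftrightarrow> Spred B lt' i x'"
    and "\<And>j. j < m \<Longrightarrow> Ppred A lt j x \<longleftrightarrow> Ppred B lt' j x'"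
    and "\<And>k. k < n + m \<Longrightarrow> Adj A lt k x y \<longleftrightarrow> Adj B lt' k x' y'"
  using assms unfolding tpc_def by (auto simp: fun_eq_iff)

lemma oiso_tpc:
  assumes "oiso A lt B lt' f" "x \<in> A" "y \<in> A"
  shows "tpc n m B lt' (f x) (f y) = tpc n m A lt x y"
  unfolding tpc_def using oiso_lt[OF assms(1)] oiso_Spred[OF assms(1)] oiso_Ppred[OF assms(1)] oiso_Adj[OF assms] assms(2,3)
  by auto

lemma cnm_hom:
  assumes lin: "lin_on A lt" and h: "cnm_homogeneous n m A lt"
    and D: "finite D" "D \<subseteq> A" "inj_on p D" "p ` D \<subseteq> A"
    and pt: "\<And>x y. x \<in> D \<Longrightarrow> y \<in> D \<Longrightarrow> tpc n m A lt (p x) (p y) = tpc n m A lt x y"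
  shows "\<exists>g. oiso A lt A lt g \<and> (\<forall>x\<in>D. g x = p x)"
proof -
  have c1: "\<forall>x\<in>D. \<forall>y\<in>D. lt x y \<longleftrightarrow> lt (p x) (p y)" using tpc_eqD(1)[OF pt] by metis
  have c2: "\<forall>i<n. \<forall>x\<in>D. Spred A lt i x \<longleftrightarrow> Spred A lt i (p x)" using tpc_eqD(2)[OF pt] by metis
  have c3: "\<forall>j<m. \<forall>x\<in>D. Ppred A lt j x \<longleftrightarrow> Ppred A lt j (p x)" using tpc_eqD(3)[OF pt] by metis
  have c4: "\<forall>k<n+m. \<forall>x\<in>D. \<forall>y\<in>D. Adj A lt k x y \<longleftrightarrow> Adj A lt k (p x) (p y)" using tpc_eqD(4)[OF pt] by metis
  have "\<exists>g. order_aut A lt g \<and> (\<forall>x\<in>D. g x = p x)"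
    using h unfolding cnm_homogeneous_def
    apply -
    apply (drule spec[of _ D])
    apply (drule spec[of _ p])
    apply (erule mp)
    using D c1 c2 c3 c4 by blast
  then show ?thesis unfolding order_aut_oiso .
qed

locale cnm =
  fixes n m :: nat and A :: "nat set" and lt :: "nat \<Rightarrow> nat \<Rightarrow> bool"
  assumes lin: "lin_on A lt" and chom: "cnm_homogeneous n m A lt"
begin

abbreviation "tp \<equiv> tpc n m A lt"

lemma aut:
  assumes "finite D" "D \<subseteq> A" "inj_on p D" "p ` D \<subseteq> A"
    "\<And>x y. x \<in> D \<Longrightarrow> y \<in> D \<Longrightarrow> tp (p x) (p y) = tp x y"
  shows "\<exists>g. oiso A lt A lt g \<and> (\<forall>x\<in>D. g x = p x)"
  by (rule cnm_hom[OF lin chom assms])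

lemma aut1:
  assumes "x \<in> A" "x' \<in> A" "tp x x = tp x' x'"
  shows "\<exists>g. oiso A lt A lt g \<and> g x = x'"
proof -
  have "\<exists>g. oiso A lt A lt g \<and> (\<forall>z\<in>{x}. g z = (\<lambda>_. x') z)"
    by (rule aut) (use assms in auto)
  then show ?thesis by auto
qed

lemma homA: "hom A tp"
  unfolding hom_def
proof (intro allI impI)
  fix D p
  assume H: "finite D \<and> D \<subseteq> A \<and> inj_on p D \<and> p ` D \<subseteq> A \<and> (\<forall>x\<in>D. \<forall>y\<in>D. tp (p x) (p y) = tp x y)"
  obtain g where g: "oiso A lt A lt g" "\<forall>x\<in>D. g x = p x"
    using aut[of D p] H by blast
  show "\<exists>g. bij_betw g A A \<and> (\<forall>x\<in>A. \<forall>y\<in>A. tp (g x) (g y) = tp x y) \<and> (\<forall>x\<in>D. g x = p x)"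
    apply (rule exI[of _ g])
    using g oiso_tpc[OF g(1)] unfolding oiso_def by blast
qed

lemma cls_decomp:
  assumes "x \<in> A"
  shows "cls A lt x = preds A lt x \<union> {x} \<union> succs A lt x"
proof
  show "cls A lt x \<subseteq> preds A lt x \<union> {x} \<union> succs A lt x"
  proof
    fix y assume y: "y \<in> cls A lt x"
    then have yA: "y \<in> A" and s: "sim1 A lt x y" unfolding cls_def by auto
    show "y \<in> preds A lt x \<union> {x} \<union> succs A lt x"
    proof (cases "y = x")
      case False
      then have "lt y x \<or> lt x y" using lin_total[OF lin yA assms] by blast
      then show ?thesis using s sim1_sym yA unfolding preds_def succs_def by blast
    qed simp
  qed
  show "preds A lt x \<union> {x} \<union> succs A lt x \<subseteq> cls A lt x"
    unfolding preds_def succs_def cls_def using sim1_sym sim1_refl[OF lin assms] assms by blast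
qed

lemma cls_disj:
  assumes "x \<in> A"
  shows "x \<notin> preds A lt x" "x \<notin> succs A lt x" "preds A lt x \<inter> succs A lt x = {}"
  using lin_irr[OF lin assms] lin_asym[OF lin] lin_trans[OF lin] assms unfolding preds_def succs_def by blast+

lemma imm_succ:
  assumes x: "x \<in> A" and ne: "succs A lt x \<noteq> {}"
  shows "\<exists>w\<in>succs A lt x. betw A lt x w = {}"
proof -
  define f where "f = (\<lambda>w. card (betw A lt x w))"
  obtain w0 where w0: "w0 \<in> succs A lt x" using ne by blast
  obtain w where w: "w \<in> succs A lt x" and wmin: "\<And>w'. w' \<in> succs A lt x \<Longrightarrow> f w \<le> f w'"
    using ex_has_least_nat[of "\<lambda>w. w \<in> succs A lt x" w0 f] w0 by blast
  have wA: "w \<in> A" and xw: "lt x w" and sw: "sim1 A lt w x" using w unfolding succs_def by auto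
  have fin: "finite (betw A lt x w)" using sw sim1_sym unfolding sim1_def by blast
  show ?thesis
  proof (rule bexI[OF _ w], rule ccontr)
    assume "betw A lt x w \<noteq> {}"
    then obtain z where z: "z \<in> betw A lt x w" by blast
    have zA: "z \<in> A" using z by (simp add: betw_mem)
    have xz: "lt x z" and zw: "lt z w"
    proof -
      have "lt x z \<and> lt z w \<or> lt w z \<and> lt z x" using z by (simp add: betw_mem)
      moreover have "\<not> (lt w z \<and> lt z x)" using lin_trans[OF lin wA zA x] lin_asym[OF lin x wA xw] by blast
      ultimately show "lt x z" "lt z w" by blast+
    qed
    have "sim1 A lt x z" using sim1_conv(1)[OF lin x zA wA xz zw] sim1_sym[OF sw] by blast
    then have zs: "z \<in> succs A lt x" unfolding succs_def using zA xz sim1_sym by blast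
    have sub: "betw A lt x z \<subseteq> betw A lt x w" by (rule betw_mono_left(2)[OF lin x zA wA xz zw])
    have "z \<notin> betw A lt x z" using lin_irr[OF lin zA] by (simp add: betw_mem)
    then have "betw A lt x z \<subset> betw A lt x w" using sub z by blast
    then have "f z < f w" unfolding f_def using fin psubset_card_mono by blast
    then show False using wmin[OF zs] by simp
  qed
qed

lemma succs_next_inf:
  assumes x: "x \<in> A" and w: "w \<in> succs A lt x" and inf: "infinite (succs A lt x)"
  shows "infinite (succs A lt w)"
proof
  assume fw: "finite (succs A lt w)"
  have wA: "w \<in> A" and xw: "lt x w" and sw: "sim1 A lt w x" using w unfolding succs_def by auto
  have fb: "finite (betw A lt x w)" using sw sim1_sym unfolding sim1_def by blast
  have "succs A lt x \<subseteq> betw A lt x w \<union> {w} \<union> succs A lt w"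
  proof
    fix u assume u: "u \<in> succs A lt x"
    then have uA: "u \<in> A" and xu: "lt x u" and su: "sim1 A lt u x" unfolding succs_def by auto
    show "u \<in> betw A lt x w \<union> {w} \<union> succs A lt w"
    proof (cases "u = w")
      case False
      then consider "lt u w" | "lt w u" using lin_total[OF lin uA wA] by blast
      then show ?thesis
      proof cases
        case 1 then show ?thesis using xu uA by (simp add: betw_mem)
      next
        case 2
        have "sim1 A lt u w" using sim1_trans[OF lin uA x wA su sim1_sym[OF sw]] .
        then show ?thesis using 2 uA unfolding succs_def by blast
      qed
    qed simp
  qed
  then show False using inf fb fw finite_subset by blast
qed

lemma dist_exists:
  assumes x: "x \<in> A" and inf: "infinite (succs A lt x)"
  shows "\<exists>z\<in>succs A lt x. card (betw A lt x z) = d \<and> infinite (succs A lt z)"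
proof (induction d)
  case 0
  have "succs A lt x \<noteq> {}" using inf by auto
  then obtain w where w: "w \<in> succs A lt x" "betw A lt x w = {}" using imm_succ[OF x] by blast
  moreover have "card (betw A lt x w) = 0" using w(2) by simp
  ultimately show ?case using succs_next_inf[OF x w(1) inf] by blast
next
  case (Suc d)
  then obtain z where z: "z \<in> succs A lt x" "card (betw A lt x z) = d" "infinite (succs A lt z)" by blast
  have zA: "z \<in> A" and xz: "lt x z" and sz: "sim1 A lt z x" using z unfolding succs_def by auto
  have "succs A lt z \<noteq> {}" using z(3) by auto
  then obtain w where w: "w \<in> succs A lt z" "betw A lt z w = {}" using imm_succ[OF zA] by blast
  have wA: "w \<in> A" and zw: "lt z w" and swz: "sim1 A lt w z" using w unfolding succs_def by auto
  have xw: "lt x w" using lin_trans[OF lin x zA wA xz zw] .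
  have swx: "sim1 A lt w x" using sim1_trans[OF lin wA zA x swz sz] .
  have ws: "w \<in> succs A lt x" unfolding succs_def using wA xw swx by blast
  have fin: "finite (betw A lt x w)" using swx sim1_sym unfolding sim1_def by blast
  have "card (betw A lt x w) = card (betw A lt x z) + 1 + card (betw A lt z w)"
    by (rule betw_split_card[OF lin x zA wA xz zw fin])
  then have "card (betw A lt x w) = Suc d" using z(2) w(2) by simp
  moreover have "infinite (succs A lt w)" using succs_next_inf[OF zA w(1) z(3)] .
  ultimately show ?case using ws by blast
qed

lemma preds_succ:
  assumes x: "x \<in> A" and z: "z \<in> succs A lt x"
  shows "preds A lt z = preds A lt x \<union> {x} \<union> betw A lt x z"
    and "x \<notin> preds A lt x" "x \<notin> betw A lt x z" "preds A lt x \<inter> betw A lt x z = {}"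
proof -
  have zA: "z \<in> A" and xz: "lt x z" and sz: "sim1 A lt z x" using z unfolding succs_def by auto
  show "preds A lt z = preds A lt x \<union> {x} \<union> betw A lt x z"
  proof
    show "preds A lt z \<subseteq> preds A lt x \<union> {x} \<union> betw A lt x z"
    proof
      fix u assume u: "u \<in> preds A lt z"
      then have uA: "u \<in> A" and uz: "lt u z" and su: "sim1 A lt u z" unfolding preds_def by auto
      show "u \<in> preds A lt x \<union> {x} \<union> betw A lt x z"
      proof (cases "u = x")
        case False
        then consider "lt u x" | "lt x u" using lin_total[OF lin uA x] by blast
        then show ?thesis
        proof cases
          case 1
          have "sim1 A lt u x" using sim1_trans[OF lin uA zA x su sz] .
          then show ?thesis using 1 uA unfolding preds_def by blast
        next
          case 2 then show ?thesis using uz uA by (simp add: betw_mem)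
        qed
      qed simp
    qed
    show "preds A lt x \<union> {x} \<union> betw A lt x z \<subseteq> preds A lt z"
    proof
      fix u assume u: "u \<in> preds A lt x \<union> {x} \<union> betw A lt x z"
      then consider "u \<in> preds A lt x" | "u = x" | "u \<in> betw A lt x z" by blast
      then show "u \<in> preds A lt z"
      proof cases
        case 1
        then have uA: "u \<in> A" and ux: "lt u x" and su: "sim1 A lt u x" unfolding preds_def by auto
        have "lt u z" using lin_trans[OF lin uA x zA ux xz] .
        moreover have "sim1 A lt u z" using sim1_trans[OF lin uA x zA su sim1_sym[OF sz]] .
        ultimately show ?thesis using uA unfolding preds_def by blast
      next
        case 2 then show ?thesis using x xz sz sim1_sym unfolding preds_def by blast
      next
        case 3
        then have uA: "u \<in> A" by (simp add: betw_mem)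
        have "lt x u \<and> lt u z \<or> lt z u \<and> lt u x" using 3 by (simp add: betw_mem)
        moreover have "\<not> (lt z u \<and> lt u x)" using lin_trans[OF lin zA uA x] lin_asym[OF lin x zA xz] by blast
        ultimately have xu: "lt x u" and uz: "lt u z" by blast+
        have "sim1 A lt u z" using sim1_conv(2)[OF lin x uA zA xu uz sim1_sym[OF sz]] .
        then show ?thesis using uA uz unfolding preds_def by blast
      qed
    qed
  qed
  show "x \<notin> preds A lt x" using lin_irr[OF lin x] unfolding preds_def by blast
  show "x \<notin> betw A lt x z" using lin_irr[OF lin x] by (simp add: betw_mem)
  show "preds A lt x \<inter> betw A lt x z = {}"
  proof (rule ccontr)
    assume "preds A lt x \<inter> betw A lt x z \<noteq> {}"
    then obtain u where u: "u \<in> preds A lt x" "u \<in> betw A lt x z" by blast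
    then have uA: "u \<in> A" and ux: "lt u x" unfolding preds_def by auto
    have "lt x u \<and> lt u z \<or> lt z u \<and> lt u x" using u(2) by (simp add: betw_mem)
    moreover have "\<not> lt x u" using lin_asym[OF lin uA x ux] .
    moreover have "\<not> lt z u" using lin_trans[OF lin zA uA x _ ux] lin_asym[OF lin x zA xz] by blast
    ultimately show False by blast
  qed
qed

lemma preds_succ_card:
  assumes x: "x \<in> A" and z: "z \<in> succs A lt x" and fin: "finite (preds A lt x)"
  shows "finite (preds A lt z)" "card (preds A lt z) = card (preds A lt x) + 1 + card (betw A lt x z)"
proof -
  have sz: "sim1 A lt z x" using z unfolding succs_def by auto
  have fb: "finite (betw A lt x z)" using sz sim1_sym unfolding sim1_def by blast
  note e = preds_succ[OF x z]
  show "finite (preds A lt z)" using e(1) fin fb by simp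
  have "card (preds A lt x \<union> {x} \<union> betw A lt x z) = card (preds A lt x \<union> {x}) + card (betw A lt x z)"
    by (rule card_Un_disjoint) (use fin fb e(3,4) in auto)
  also have "card (preds A lt x \<union> {x}) = card (preds A lt x) + 1" using fin e(2) by simp
  finally show "card (preds A lt z) = card (preds A lt x) + 1 + card (betw A lt x z)" using e(1) by simp
qed

lemma tp_def': "tp a b = (lt a b, \<lambda>i. i < n \<and> Spred A lt i a, \<lambda>j. j < m \<and> Ppred A lt j a, \<lambda>k. k < n + m \<and> Adj A lt k a b)"
  unfolding tpc_def ..

lemma Adj_self: "y \<in> A \<Longrightarrow> Adj A lt k y y \<longleftrightarrow> k = 0"
  unfolding Adj_eq using betw_self[OF lin] by auto

lemma Adj_sym: "Adj A lt k a b \<longleftrightarrow> Adj A lt k b a"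
  unfolding Adj_eq using betw_sym by metis

lemma succs_fin_aux:
  assumes x: "x \<in> A" and inf: "infinite (succs A lt x)" and pf: "finite (preds A lt x)"
  shows False
proof -
  obtain y1 where y1: "y1 \<in> succs A lt x" "card (betw A lt x y1) = m" "infinite (succs A lt y1)"
    using dist_exists[OF x inf] by blast
  obtain y2 where y2: "y2 \<in> succs A lt x" "card (betw A lt x y2) = Suc m" "infinite (succs A lt y2)"
    using dist_exists[OF x inf] by blast
  have y1A: "y1 \<in> A" using y1(1) succs_sub[of A lt x] by blast
  have y2A: "y2 \<in> A" using y2(1) succs_sub[of A lt x] by blast
  note c1 = preds_succ_card[OF x y1(1) pf]
  note c2 = preds_succ_card[OF x y2(1) pf]
  have S1: "\<not> Spred A lt i y1" "\<not> Spred A lt i y2" for i using y1(3) y2(3) by (simp_all add: Spred_eq)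
  have P1: "\<not> Ppred A lt j y1" "\<not> Ppred A lt j y2" if "j < m" for j
    using c1(2) c2(2) y1(2) y2(2) that by (simp_all add: Ppred_eq)
  have "tp y1 y1 = tp y2 y2"
    unfolding tp_def' Adj_self[OF y1A] Adj_self[OF y2A] using S1 lin_irr[OF lin y1A] lin_irr[OF lin y2A]
    apply (simp add: fun_eq_iff)
    using P1 by blast
  then obtain g where g: "oiso A lt A lt g" "g y1 = y2" using aut1[OF y1A y2A] by blast
  have "g ` preds A lt y1 = preds A lt y2" using oiso_preds[OF g(1) y1A] g(2) by simp
  then have "card (preds A lt y2) = card (preds A lt y1)" using oiso_card_img[OF g(1) preds_sub] by metis
  then show False using c1 c2 y1 y2 by simp
qed

lemma succs_fin_aux2:
  assumes x: "x \<in> A" and inf: "infinite (succs A lt x)" and pinf: "infinite (preds A lt x)"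
  shows False
proof -
  obtain z where z: "z \<in> succs A lt x" "card (betw A lt x z) = n + m" "infinite (succs A lt z)"
    using dist_exists[OF x inf] by blast
  obtain z' where z': "z' \<in> succs A lt x" "card (betw A lt x z') = Suc (n + m)" "infinite (succs A lt z')"
    using dist_exists[OF x inf] by blast
  have zA: "z \<in> A" and z'A: "z' \<in> A" and xz: "lt x z" and xz': "lt x z'"
    and sz: "sim1 A lt z x" and sz': "sim1 A lt z' x" using z(1) z'(1) unfolding succs_def by auto
  have pz: "infinite (preds A lt z)" using preds_succ(1)[OF x z(1)] pinf by auto
  have pz': "infinite (preds A lt z')" using preds_succ(1)[OF x z'(1)] pinf by auto
  have fbz: "finite (betw A lt x z)" "finite (betw A lt x z')" using sz sz' sim1_sym unfolding sim1_def by blast+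
  have U: "tp a b = (lt a b, \<lambda>i. False, \<lambda>j. False, \<lambda>k. k < n + m \<and> Adj A lt k a b)"
    if "infinite (succs A lt a)" "infinite (preds A lt a)" for a b
    unfolding tp_def' using that by (auto simp: Spred_eq Ppred_eq fun_eq_iff)
  define p where "p = (\<lambda>u. if u = z then z' else u)"
  have xz_ne: "x \<noteq> z" "x \<noteq> z'" using xz xz' lin_irr[OF lin x] by auto
  have "\<exists>g. oiso A lt A lt g \<and> (\<forall>u\<in>{x, z}. g u = p u)"
  proof (rule aut)
    show "finite {x, z}" by simp
    show "{x, z} \<subseteq> A" using x zA by simp
    show "inj_on p {x, z}" unfolding p_def using xz_ne by (auto simp: inj_on_def)
    show "p ` {x, z} \<subseteq> A" unfolding p_def using x z'A xz_ne by auto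
    fix a b assume a: "a \<in> {x, z}" and b: "b \<in> {x, z}"
    have Az: "Adj A lt k x z \<longleftrightarrow> k = n + m" for k using z(2) fbz by (auto simp: Adj_eq)
    have Az': "Adj A lt k x z' \<longleftrightarrow> k = Suc (n + m)" for k using z'(2) fbz by (auto simp: Adj_eq)
    have zz: "tp z' z' = tp z z"
      using U[OF z'(3) pz'] U[OF z(3) pz] Adj_self[OF zA] Adj_self[OF z'A] lin_irr[OF lin zA] lin_irr[OF lin z'A]
      by simp
    have xzt: "tp x z' = tp x z"
      using U[OF inf pinf, of z] U[OF inf pinf, of z'] xz xz' Az Az' by (simp add: fun_eq_iff) auto
    have zxt: "tp z' x = tp z x"
      using U[OF z'(3) pz', of x] U[OF z(3) pz, of x] lin_asym[OF lin x zA xz] lin_asym[OF lin x z'A xz']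
        Az Az' Adj_sym[of _ z x] Adj_sym[of _ z' x] by (simp add: fun_eq_iff) auto
    show "tp (p a) (p b) = tp a b"
      using a b zz xzt zxt xz_ne unfolding p_def by auto
  qed
  then obtain g where g: "oiso A lt A lt g" "g x = x" "g z = z'" unfolding p_def using xz_ne by auto
  have "g ` betw A lt x z = betw A lt x z'" using oiso_betw[OF g(1) x zA] g by simp
  then have "card (betw A lt x z') = card (betw A lt x z)"
    using oiso_card_img[OF g(1) betw_sub] by metis
  then show False using z(2) z'(2) by simp
qed

lemma succs_fin: "x \<in> A \<Longrightarrow> finite (succs A lt x)"
  using succs_fin_aux succs_fin_aux2 by blast

end

definition flip :: "(nat \<Rightarrow> nat \<Rightarrow> bool) \<Rightarrow> nat \<Rightarrow> nat \<Rightarrow> bool" where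
  "flip lt x y = lt y x"

lemma betw_flip: "betw A (flip lt) = betw A lt"
  unfolding betw_def flip_def by (auto simp: fun_eq_iff)
lemma sim1_flip: "sim1 A (flip lt) = sim1 A lt"
  by (simp add: fun_eq_iff sim1_def betw_flip)
lemma succs_flip: "succs A (flip lt) = preds A lt"
  unfolding succs_def preds_def sim1_flip by (auto simp: fun_eq_iff flip_def intro: sim1_sym)
lemma preds_flip: "preds A (flip lt) = succs A lt"
  unfolding succs_def preds_def sim1_flip by (auto simp: fun_eq_iff flip_def intro: sim1_sym)
lemma Spred_flip: "Spred A (flip lt) = Ppred A lt"
  by (simp add: fun_eq_iff Spred_eq Ppred_eq succs_flip)
lemma Ppred_flip: "Ppred A (flip lt) = Spred A lt"
  by (simp add: fun_eq_iff Spred_eq Ppred_eq preds_flip)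
lemma Adj_flip: "Adj A (flip lt) = Adj A lt"
  by (simp add: fun_eq_iff Adj_def betw_flip)
lemma order_aut_flip: "order_aut A (flip lt) g = order_aut A lt g"
  unfolding order_aut_def flip_def by auto
lemma lin_flip: "lin_on A lt \<Longrightarrow> lin_on A (flip lt)"
  unfolding lin_on_def flip_def by blast

lemma cnm_flip_hom:
  assumes h: "cnm_homogeneous n m A lt"
  shows "cnm_homogeneous m n A (flip lt)"
  unfolding cnm_homogeneous_def Spred_flip Ppred_flip Adj_flip order_aut_flip
proof (intro allI impI)
  fix D p
  assume H: "finite D \<and> D \<subseteq> A \<and> inj_on p D \<and> p ` D \<subseteq> A \<and>
       (\<forall>x\<in>D. \<forall>y\<in>D. flip lt x y = flip lt (p x) (p y)) \<and>
       (\<forall>i<m. \<forall>x\<in>D. Ppred A lt i x = Ppred A lt i (p x)) \<and>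
       (\<forall>j<n. \<forall>x\<in>D. Spred A lt j x = Spred A lt j (p x)) \<and>
       (\<forall>k<m + n. \<forall>x\<in>D. \<forall>y\<in>D. Adj A lt k x y = Adj A lt k (p x) (p y))"
  have c1: "\<forall>x\<in>D. \<forall>y\<in>D. lt x y = lt (p x) (p y)" using H unfolding flip_def by blast
  have c4: "\<forall>k<n + m. \<forall>x\<in>D. \<forall>y\<in>D. Adj A lt k x y = Adj A lt k (p x) (p y)" using H by (simp add: add.commute)
  show "\<exists>g. order_aut A lt g \<and> (\<forall>x\<in>D. g x = p x)"
    using h unfolding cnm_homogeneous_def
    apply -
    apply (drule spec[of _ D])
    apply (drule spec[of _ p])
    apply (erule mp)
    using H c1 c4 by blast
qed

context cnm
begin

lemma flip: "cnm m n A (flip lt)"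
  by unfold_locales (use lin_flip[OF lin] cnm_flip_hom[OF chom] in auto)

lemma preds_fin: "x \<in> A \<Longrightarrow> finite (preds A lt x)"
  using cnm.succs_fin[OF flip] unfolding succs_flip .

lemma cls_fin: "x \<in> A \<Longrightarrow> finite (cls A lt x)"
  using cls_decomp preds_fin succs_fin by simp

end

definition sz :: "nat set \<Rightarrow> (nat \<Rightarrow> nat \<Rightarrow> bool) \<Rightarrow> nat \<Rightarrow> nat" where
  "sz A lt x = card (cls A lt x)"
definition pos :: "nat set \<Rightarrow> (nat \<Rightarrow> nat \<Rightarrow> bool) \<Rightarrow> nat \<Rightarrow> nat" where
  "pos A lt x = card (preds A lt x)"

context cnm
begin

lemma cls_A: "y \<in> cls A lt x \<Longrightarrow> y \<in> A"
  unfolding cls_def by auto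

lemma self_cls: "x \<in> A \<Longrightarrow> x \<in> cls A lt x"
  unfolding cls_def using sim1_refl[OF lin] by auto

lemma cls_same:
  assumes "x \<in> A" "y \<in> cls A lt x"
  shows "cls A lt y = cls A lt x"
proof -
  have yA: "y \<in> A" and s: "sim1 A lt x y" using assms(2) unfolding cls_def by auto
  show ?thesis unfolding cls_def
    using sim1_trans[OF lin _ yA assms(1) _ sim1_sym[OF s]] sim1_trans[OF lin _ assms(1) yA _ s] sim1_sym
    by blast
qed

lemma sz_same: "x \<in> A \<Longrightarrow> y \<in> cls A lt x \<Longrightarrow> sz A lt y = sz A lt x"
  unfolding sz_def using cls_same by simp

lemma sz_decomp: "x \<in> A \<Longrightarrow> sz A lt x = pos A lt x + 1 + card (succs A lt x)"
proof -
  assume x: "x \<in> A"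
  have "card (preds A lt x \<union> {x} \<union> succs A lt x) = card (preds A lt x \<union> {x}) + card (succs A lt x)"
    by (rule card_Un_disjoint) (use preds_fin[OF x] succs_fin[OF x] cls_disj[OF x] in auto)
  also have "card (preds A lt x \<union> {x}) = card (preds A lt x) + 1" using preds_fin[OF x] cls_disj(1)[OF x] by simp
  finally show ?thesis unfolding sz_def pos_def cls_decomp[OF x] by simp
qed

lemma pos_lt_sz: "x \<in> A \<Longrightarrow> pos A lt x < sz A lt x"
  using sz_decomp by simp

lemma pos_succ: "x \<in> A \<Longrightarrow> z \<in> succs A lt x \<Longrightarrow> pos A lt z = pos A lt x + 1 + card (betw A lt x z)"
  unfolding pos_def using preds_succ_card(2) preds_fin by blast

lemma in_succs: "y \<in> A \<Longrightarrow> z \<in> A \<Longrightarrow> lt y z \<Longrightarrow> sim1 A lt y z \<Longrightarrow> z \<in> succs A lt y"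
  unfolding succs_def using sim1_sym by blast

lemma cls_sim: "y \<in> cls A lt x \<Longrightarrow> z \<in> cls A lt x \<Longrightarrow> x \<in> A \<Longrightarrow> sim1 A lt y z"
  unfolding cls_def using sim1_trans[OF lin] sim1_sym by blast

lemma pos_mono:
  assumes "x \<in> A" "y \<in> cls A lt x" "z \<in> cls A lt x" "lt y z"
  shows "pos A lt y < pos A lt z"
proof -
  have yA: "y \<in> A" and zA: "z \<in> A" using assms cls_A by auto
  have "z \<in> succs A lt y" by (rule in_succs[OF yA zA assms(4) cls_sim[OF assms(2,3,1)]])
  then show ?thesis using pos_succ[OF yA] by simp
qed

lemma pos_inj: "x \<in> A \<Longrightarrow> inj_on (pos A lt) (cls A lt x)"
proof (rule inj_onI)
  fix y z assume x: "x \<in> A" and y: "y \<in> cls A lt x" and z: "z \<in> cls A lt x" and e: "pos A lt y = pos A lt z"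
  show "y = z"
  proof (rule ccontr)
    assume "y \<noteq> z"
    then have "lt y z \<or> lt z y" using lin_total[OF lin cls_A[OF y] cls_A[OF z]] by blast
    then show False using pos_mono[OF x y z] pos_mono[OF x z y] e by auto
  qed
qed

lemma pos_img: "x \<in> A \<Longrightarrow> pos A lt ` cls A lt x = {..<sz A lt x}"
proof -
  assume x: "x \<in> A"
  have sub: "pos A lt ` cls A lt x \<subseteq> {..<sz A lt x}"
  proof
    fix p assume "p \<in> pos A lt ` cls A lt x"
    then obtain y where y: "y \<in> cls A lt x" "p = pos A lt y" by blast
    then show "p \<in> {..<sz A lt x}" using pos_lt_sz[OF cls_A[OF y(1)]] sz_same[OF x y(1)] by simp
  qed
  have "card (pos A lt ` cls A lt x) = sz A lt x" unfolding sz_def using card_image[OF pos_inj[OF x]] .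
  then show ?thesis using card_subset_eq[OF _ sub] by simp
qed

lemma pos_exists: "x \<in> A \<Longrightarrow> p < sz A lt x \<Longrightarrow> \<exists>u\<in>cls A lt x. pos A lt u = p"
  using pos_img by (metis image_iff lessThan_iff)

lemma Spred_sz: "y \<in> A \<Longrightarrow> Spred A lt i y \<longleftrightarrow> sz A lt y - 1 - pos A lt y = i"
  unfolding Spred_eq using succs_fin sz_decomp by simp

lemma Ppred_pos: "y \<in> A \<Longrightarrow> Ppred A lt j y \<longleftrightarrow> pos A lt y = j"
  unfolding Ppred_eq pos_def using preds_fin by simp

lemma same_tp:
  assumes "x \<in> A" "x' \<in> A" "tp x x = tp x' x'"
  shows "sz A lt x = sz A lt x'" "pos A lt x = pos A lt x'"
proof -
  obtain g where g: "oiso A lt A lt g" "g x = x'" using aut1[OF assms] by blast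
  have "g ` cls A lt x = cls A lt x'" using oiso_cls[OF g(1) assms(1)] g(2) by simp
  then show "sz A lt x = sz A lt x'" unfolding sz_def using oiso_card_img[OF g(1) cls_sub] by metis
  have "g ` preds A lt x = preds A lt x'" using oiso_preds[OF g(1) assms(1)] g(2) by simp
  then show "pos A lt x = pos A lt x'" unfolding pos_def using oiso_card_img[OF g(1) preds_sub] by metis
qed

lemma sz_bound: "x \<in> A \<Longrightarrow> sz A lt x \<le> n + m + 1"
proof (rule ccontr)
  assume x: "x \<in> A" and "\<not> sz A lt x \<le> n + m + 1"
  then have big: "n + m + 2 \<le> sz A lt x" by simp
  obtain y1 where y1: "y1 \<in> cls A lt x" "pos A lt y1 = m" using pos_exists[OF x, of m] big by auto
  obtain y2 where y2: "y2 \<in> cls A lt x" "pos A lt y2 = Suc m" using pos_exists[OF x, of "Suc m"] big by auto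
  have y1A: "y1 \<in> A" and y2A: "y2 \<in> A" using y1 y2 cls_A by auto
  have s1: "sz A lt y1 = sz A lt x" "sz A lt y2 = sz A lt x" using sz_same[OF x] y1 y2 by auto
  have S: "\<not> Spred A lt i y1" "\<not> Spred A lt i y2" if "i < n" for i
    using that s1 y1(2) y2(2) big Spred_sz[OF y1A] Spred_sz[OF y2A] by auto
  have P: "\<not> Ppred A lt j y1" "\<not> Ppred A lt j y2" if "j < m" for j
    using that y1(2) y2(2) Ppred_pos[OF y1A] Ppred_pos[OF y2A] by auto
  have "tp y1 y1 = tp y2 y2"
    unfolding tp_def' Adj_self[OF y1A] Adj_self[OF y2A] using lin_irr[OF lin y1A] lin_irr[OF lin y2A]
    apply (simp add: fun_eq_iff)
    using S P by blast
  then have "pos A lt y1 = pos A lt y2" using same_tp[OF y1A y2A] by simp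
  then show False using y1 y2 by simp
qed

lemma Adj_same:
  assumes "a \<in> A" "b \<in> A" "lt a b" "sim1 A lt a b"
  shows "Adj A lt k a b \<longleftrightarrow> pos A lt b - pos A lt a - 1 = k"
proof -
  have bs: "b \<in> succs A lt a" by (rule in_succs[OF assms])
  have "finite (betw A lt a b)" using assms(4) unfolding sim1_def .
  then show ?thesis unfolding Adj_eq using pos_succ[OF assms(1) bs] by auto
qed

lemma Adj_diff: "\<not> sim1 A lt a b \<Longrightarrow> \<not> Adj A lt k a b"
  unfolding Adj_eq sim1_def by simp

lemma sim1_Adj:
  assumes "a \<in> A" "b \<in> A" "a \<noteq> b"
  shows "sim1 A lt a b \<longleftrightarrow> (\<exists>k<n+m. Adj A lt k a b)"
proof
  assume s: "sim1 A lt a b"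
  have main: "\<exists>k<n+m. Adj A lt k a b" if ab: "a \<in> A" "b \<in> A" "lt a b" "sim1 A lt a b" for a b
  proof -
    have bs: "b \<in> succs A lt a" by (rule in_succs[OF ab])
    have "b \<in> cls A lt a" using ab unfolding cls_def by blast
    then have "pos A lt b < sz A lt a" using pos_lt_sz[OF ab(2)] sz_same[OF ab(1)] by simp
    then have "pos A lt b \<le> n + m" using sz_bound[OF ab(1)] by simp
    moreover have "pos A lt b = pos A lt a + 1 + card (betw A lt a b)" using pos_succ[OF ab(1) bs] .
    ultimately have "card (betw A lt a b) < n + m" by simp
    moreover have "Adj A lt (card (betw A lt a b)) a b" using ab(4) unfolding Adj_eq sim1_def by simp
    ultimately show ?thesis by blast
  qed
  consider "lt a b" | "lt b a" using lin_total[OF lin assms] by blast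
  then show "\<exists>k<n+m. Adj A lt k a b"
  proof cases
    case 1 then show ?thesis using main[OF assms(1,2) 1 s] by blast
  next
    case 2 then show ?thesis using main[OF assms(2,1) 2 sim1_sym[OF s]] Adj_sym by blast
  qed
next
  assume "\<exists>k<n+m. Adj A lt k a b"
  then show "sim1 A lt a b" using Adj_diff by blast
qed

lemma diff_cls_order:
  assumes "u0 \<in> A" "v0 \<in> A" "lt u0 v0" "\<not> sim1 A lt u0 v0" "u \<in> cls A lt u0" "v \<in> cls A lt v0"
  shows "lt u v" "\<not> sim1 A lt u v"
proof -
  have uA: "u \<in> A" and vA: "v \<in> A" using assms cls_A by auto
  have su: "sim1 A lt u0 u" and sv: "sim1 A lt v0 v" using assms(5,6) unfolding cls_def by auto
  show ns: "\<not> sim1 A lt u v"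
  proof
    assume "sim1 A lt u v"
    then have "sim1 A lt u0 v" using sim1_trans[OF lin assms(1) uA vA su] by blast
    then have "sim1 A lt u0 v0" using sim1_trans[OF lin assms(1) vA assms(2) _ sim1_sym[OF sv]] by blast
    then show False using assms(4) by simp
  qed
  have uv0: "lt u v0"
  proof (rule ccontr)
    assume "\<not> lt u v0"
    moreover have "u \<noteq> v0" using assms(4) su by auto
    ultimately have "lt v0 u" using lin_total[OF lin uA assms(2)] by blast
    then have "sim1 A lt u0 v0" using sim1_conv(1)[OF lin assms(1) assms(2) uA assms(3) _ su] by blast
    then show False using assms(4) by simp
  qed
  show "lt u v"
  proof (rule ccontr)
    assume "\<not> lt u v"
    moreover have "u \<noteq> v" using ns sim1_refl[OF lin uA] by auto
    ultimately have "lt v u" using lin_total[OF lin uA vA] by blast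
    then have "sim1 A lt u v0" using sim1_conv(2)[OF lin vA uA assms(2) _ uv0 sim1_sym[OF sv]] by blast
    then have "sim1 A lt u0 v0" using sim1_trans[OF lin assms(1) uA assms(2) su] by blast
    then show False using assms(4) by simp
  qed
qed

end


lemma tpc_eq_iff:
  "tpc n m A lt a b = tpc n m B lt' c d \<longleftrightarrow> (lt a b \<longleftrightarrow> lt' c d) \<and> (\<forall>i<n. Spred A lt i a \<longleftrightarrow> Spred B lt' i c) \<and>
     (\<forall>j<m. Ppred A lt j a \<longleftrightarrow> Ppred B lt' j c) \<and> (\<forall>k<n+m. Adj A lt k a b \<longleftrightarrow> Adj B lt' k c d)"
  unfolding tpc_def by (auto simp: fun_eq_iff)

context cnm
begin

lemma tp_diag: "y \<in> A \<Longrightarrow> tp y y = (False, \<lambda>i. i < n \<and> sz A lt y - 1 - pos A lt y = i, \<lambda>j. j < m \<and> pos A lt y = j, \<lambda>k. k < n + m \<and> k = 0)"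
  unfolding tp_def' using lin_irr[OF lin] Spred_sz Ppred_pos Adj_self by (simp add: fun_eq_iff)

lemma tp_same:
  assumes "a \<in> A" "b \<in> A" "lt a b" "sim1 A lt a b"
  shows "tp a b = (True, \<lambda>i. i < n \<and> sz A lt a - 1 - pos A lt a = i, \<lambda>j. j < m \<and> pos A lt a = j,
                    \<lambda>k. k < n + m \<and> pos A lt b - pos A lt a - 1 = k)"
    and "tp b a = (False, \<lambda>i. i < n \<and> sz A lt b - 1 - pos A lt b = i, \<lambda>j. j < m \<and> pos A lt b = j,
                    \<lambda>k. k < n + m \<and> pos A lt b - pos A lt a - 1 = k)"
  unfolding tp_def' using assms Spred_sz Ppred_pos Adj_same[OF assms] Adj_sym lin_asym[OF lin assms(1,2,3)]
  by (simp_all add: fun_eq_iff)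

lemma tp_diff:
  assumes "a \<in> A" "b \<in> A" "\<not> sim1 A lt a b"
  shows "tp a b = (lt a b, \<lambda>i. i < n \<and> sz A lt a - 1 - pos A lt a = i, \<lambda>j. j < m \<and> pos A lt a = j, \<lambda>k. False)"
  unfolding tp_def' using assms Spred_sz Ppred_pos Adj_diff by (simp add: fun_eq_iff)

end

definition szset :: "nat set \<Rightarrow> (nat \<Rightarrow> nat \<Rightarrow> bool) \<Rightarrow> nat set" where
  "szset A lt = sz A lt ` A"
definition bdat :: "nat set \<Rightarrow> (nat \<Rightarrow> nat \<Rightarrow> bool) \<Rightarrow> (nat \<times> nat) set" where
  "bdat A lt = {(sz A lt x, sz A lt y) | x y. x \<in> A \<and> y \<in> A \<and> lt x y \<and> \<not> sim1 A lt x y}"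

locale cnm2 = a: cnm n m A lt + b: cnm n m B lt' for n m A lt B lt'
begin

lemma R1:
  assumes x: "x \<in> A" and ss: "szset A lt \<subseteq> szset B lt'"
  shows "\<exists>u\<in>B. tpc n m B lt' u u = tpc n m A lt x x"
proof -
  have "sz A lt x \<in> szset B lt'" using ss x unfolding szset_def by auto
  then obtain w where w: "w \<in> B" "sz B lt' w = sz A lt x" unfolding szset_def by auto
  have "pos A lt x < sz B lt' w" using a.pos_lt_sz[OF x] w by simp
  then obtain u where u: "u \<in> cls B lt' w" "pos B lt' u = pos A lt x" using b.pos_exists[OF w(1)] by blast
  have uB: "u \<in> B" using b.cls_A[OF u(1)] .
  have "sz B lt' u = sz A lt x" using b.sz_same[OF w(1) u(1)] w by simp
  then show ?thesis using b.tp_diag[OF uB] a.tp_diag[OF x] u uB by auto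
qed

lemma R2:
  assumes x: "x \<in> A" and y: "y \<in> A" and yx: "lt y x"
    and ss: "szset A lt \<subseteq> szset B lt'" and bs: "bdat A lt \<subseteq> bdat B lt'"
  shows "\<exists>u v. u \<in> B \<and> v \<in> B \<and> lt' u v \<and> tpc n m B lt' u v = tpc n m A lt y x \<and> tpc n m B lt' v u = tpc n m A lt x y
      \<and> tpc n m B lt' u u = tpc n m A lt y y \<and> tpc n m B lt' v v = tpc n m A lt x x"
proof (cases "sim1 A lt y x")
  case True
  have xc: "x \<in> cls A lt y" using True x unfolding cls_def by blast
  have szx: "sz A lt x = sz A lt y" using a.sz_same[OF y xc] .
  have pyx: "pos A lt y < pos A lt x" using a.pos_mono[OF y a.self_cls[OF y] xc yx] .
  have px: "pos A lt x < sz A lt y" using a.pos_lt_sz[OF x] szx by simp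
  have "sz A lt y \<in> szset B lt'" using ss y unfolding szset_def by auto
  then obtain w where w: "w \<in> B" "sz B lt' w = sz A lt y" unfolding szset_def by auto
  obtain u where u: "u \<in> cls B lt' w" "pos B lt' u = pos A lt y" using b.pos_exists[OF w(1), of "pos A lt y"] pyx px w by auto
  obtain v where v: "v \<in> cls B lt' w" "pos B lt' v = pos A lt x" using b.pos_exists[OF w(1), of "pos A lt x"] px w by auto
  have uB: "u \<in> B" and vB: "v \<in> B" using u v b.cls_A by auto
  have suv: "sim1 B lt' u v" using b.cls_sim[OF u(1) v(1) w(1)] .
  have szu: "sz B lt' u = sz A lt y" "sz B lt' v = sz A lt y" using b.sz_same[OF w(1)] u v w by auto
  have uv: "lt' u v"
  proof (rule ccontr)
    assume "\<not> lt' u v"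
    moreover have "u \<noteq> v" using u v pyx by auto
    ultimately have "lt' v u" using lin_total[OF b.lin uB vB] by blast
    then have "pos B lt' v < pos B lt' u" using b.pos_mono[OF w(1) v(1) u(1)] by simp
    then show False using u v pyx by simp
  qed
  show ?thesis
    apply (rule exI[of _ u], rule exI[of _ v])
    using uB vB uv b.tp_same[OF uB vB uv suv] a.tp_same[OF y x yx True] b.tp_diag[OF uB] b.tp_diag[OF vB]
      a.tp_diag[OF x] a.tp_diag[OF y] u(2) v(2) szu szx by simp
next
  case False
  have "(sz A lt y, sz A lt x) \<in> bdat A lt" unfolding bdat_def using x y yx False by blast
  then have "(sz A lt y, sz A lt x) \<in> bdat B lt'" using bs by blast
  then obtain u0 v0 where uv0: "u0 \<in> B" "v0 \<in> B" "lt' u0 v0" "\<not> sim1 B lt' u0 v0"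
    "sz B lt' u0 = sz A lt y" "sz B lt' v0 = sz A lt x" unfolding bdat_def by auto
  obtain u where u: "u \<in> cls B lt' u0" "pos B lt' u = pos A lt y"
    using b.pos_exists[OF uv0(1), of "pos A lt y"] a.pos_lt_sz[OF y] uv0(5) by auto
  obtain v where v: "v \<in> cls B lt' v0" "pos B lt' v = pos A lt x"
    using b.pos_exists[OF uv0(2), of "pos A lt x"] a.pos_lt_sz[OF x] uv0(6) by auto
  have uB: "u \<in> B" and vB: "v \<in> B" using u v b.cls_A by auto
  have o: "lt' u v" "\<not> sim1 B lt' u v" using b.diff_cls_order[OF uv0(1-4) u(1) v(1)] by auto
  have o2: "\<not> sim1 B lt' v u" using o(2) sim1_sym by blast
  have szu: "sz B lt' u = sz A lt y" "sz B lt' v = sz A lt x" using b.sz_same uv0 u v by auto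
  have F2: "\<not> sim1 A lt x y" using False sim1_sym by blast
  have nxy: "\<not> lt x y" using lin_asym[OF a.lin y x yx] .
  have nvu: "\<not> lt' v u" using lin_asym[OF b.lin uB vB o(1)] .
  show ?thesis
    apply (rule exI[of _ u], rule exI[of _ v])
    using uB vB o(1) b.tp_diff[OF uB vB o(2)] b.tp_diff[OF vB uB o2] a.tp_diff[OF y x False] a.tp_diff[OF x y F2]
      b.tp_diag[OF uB] b.tp_diag[OF vB] a.tp_diag[OF x] a.tp_diag[OF y] u(2) v(2) szu yx nxy nvu by simp
qed

end

context cnm2
begin

lemma adj_comp:
  assumes a: "a1 \<in> B" "a2 \<in> B" "a3 \<in> B" "lt' a1 a2" "lt' a2 a3"
    and c: "c1 \<in> A" "c2 \<in> A" "c3 \<in> A" "lt c1 c2" "lt c2 c3"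
    and e12: "\<forall>k<n+m. Adj B lt' k a1 a2 \<longleftrightarrow> Adj A lt k c1 c2"
    and e23: "\<forall>k<n+m. Adj B lt' k a2 a3 \<longleftrightarrow> Adj A lt k c2 c3"
  shows "Adj B lt' k a1 a3 \<longleftrightarrow> Adj A lt k c1 c3"
proof -
  have ne: "a1 \<noteq> a2" "a2 \<noteq> a3" "c1 \<noteq> c2" "c2 \<noteq> c3"
    using a c lin_irr[OF a.lin] lin_irr[OF b.lin] by auto
  show ?thesis
  proof (cases "sim1 A lt c1 c3")
    case True
    have s12: "sim1 A lt c1 c2" and s23: "sim1 A lt c2 c3" using sim1_conv[OF a.lin c True] by auto
    obtain k1 where k1: "k1 < n + m" "Adj A lt k1 c1 c2" using a.sim1_Adj[OF c(1,2) ne(3)] s12 by blast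
    obtain k2 where k2: "k2 < n + m" "Adj A lt k2 c2 c3" using a.sim1_Adj[OF c(2,3) ne(4)] s23 by blast
    have b12: "Adj B lt' k1 a1 a2" using e12 k1 by blast
    have b23: "Adj B lt' k2 a2 a3" using e23 k2 by blast
    have t12: "sim1 B lt' a1 a2" using b.sim1_Adj[OF a(1,2) ne(1)] b12 k1 by blast
    have t23: "sim1 B lt' a2 a3" using b.sim1_Adj[OF a(2,3) ne(2)] b23 k2 by blast
    have t13: "sim1 B lt' a1 a3" using sim1_trans[OF b.lin a(1-3) t12 t23] .
    have "card (betw B lt' a1 a3) = card (betw B lt' a1 a2) + 1 + card (betw B lt' a2 a3)"
      using betw_split_card[OF b.lin a] t13 unfolding sim1_def by blast
    moreover have "card (betw A lt c1 c3) = card (betw A lt c1 c2) + 1 + card (betw A lt c2 c3)"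
      using betw_split_card[OF a.lin c] True unfolding sim1_def by blast
    moreover have "card (betw B lt' a1 a2) = card (betw A lt c1 c2)" using b12 k1 unfolding Adj_eq by simp
    moreover have "card (betw B lt' a2 a3) = card (betw A lt c2 c3)" using b23 k2 unfolding Adj_eq by simp
    ultimately have "card (betw B lt' a1 a3) = card (betw A lt c1 c3)" by simp
    then show ?thesis using t13 True unfolding Adj_eq sim1_def by simp
  next
    case False
    have "\<not> sim1 B lt' a1 a3"
    proof
      assume t13: "sim1 B lt' a1 a3"
      have t12: "sim1 B lt' a1 a2" and t23: "sim1 B lt' a2 a3" using sim1_conv[OF b.lin a t13] by auto
      obtain k1 where k1: "k1 < n + m" "Adj B lt' k1 a1 a2" using b.sim1_Adj[OF a(1,2) ne(1)] t12 by blast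
      obtain k2 where k2: "k2 < n + m" "Adj B lt' k2 a2 a3" using b.sim1_Adj[OF a(2,3) ne(2)] t23 by blast
      have "sim1 A lt c1 c2" using a.sim1_Adj[OF c(1,2) ne(3)] e12 k1 by blast
      moreover have "sim1 A lt c2 c3" using a.sim1_Adj[OF c(2,3) ne(4)] e23 k2 by blast
      ultimately have "sim1 A lt c1 c3" using sim1_trans[OF a.lin c(1-3)] by blast
      then show False using False by simp
    qed
    then show ?thesis using False by (simp add: Adj_eq sim1_def)
  qed
qed

lemma emb:
  assumes ss: "szset A lt \<subseteq> szset B lt'" and bs: "bdat A lt \<subseteq> bdat B lt'"
  shows "emb_all A (tpc n m A lt) B (tpc n m B lt')"
proof -
  let ?tA = "tpc n m A lt" and ?tB = "tpc n m B lt'"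
  have main: "\<forall>E. finite E \<and> E \<subseteq> A \<and> card E = N \<longrightarrow>
      (\<exists>h. inj_on h E \<and> h ` E \<subseteq> B \<and> (\<forall>x\<in>E. \<forall>y\<in>E. ?tB (h x) (h y) = ?tA x y))" for N
  proof (induction N)
    case 0
    show ?case by auto
  next
    case (Suc N)
    show ?case
    proof (intro allI impI)
      fix E assume E: "finite E \<and> E \<subseteq> A \<and> card E = Suc N"
      then have Ene: "E \<noteq> {}" by auto
      obtain x where x: "x \<in> E" "\<forall>y\<in>E. y \<noteq> x \<longrightarrow> lt y x" using lin_max[OF a.lin _ Ene] E by blast
      define F where "F = E - {x}"
      have F: "finite F \<and> F \<subseteq> A \<and> card F = N"
      proof -
        have e: "finite E" "E \<subseteq> A" "card E = Suc N" using E by auto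
        have "F \<subseteq> A" unfolding F_def using e(2) by blast
        moreover have "finite F" unfolding F_def using e(1) by simp
        moreover have "card F = N" unfolding F_def using e(1,3) x(1) by (simp add: card_Diff_singleton)
        ultimately show ?thesis by blast
      qed
      obtain h where h: "inj_on h F" "h ` F \<subseteq> B" "\<forall>x\<in>F. \<forall>y\<in>F. ?tB (h x) (h y) = ?tA x y"
        using Suc.IH[rule_format, OF F] by (elim exE conjE) blast
      have xA: "x \<in> A" using E x by auto
      have EF: "E = insert x F" "x \<notin> F" using x(1) unfolding F_def by auto
      have FA: "z \<in> A" if "z \<in> F" for z using F that by auto
      have hFB: "h z \<in> B" if "z \<in> F" for z using h(2) that by auto
      have FE: "z \<in> F \<Longrightarrow> z \<noteq> x \<and> lt z x" for z using x EF by auto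
      obtain b where bB: "b \<in> B" and bb: "?tB b b = ?tA x x"
        and bF: "\<forall>z\<in>F. ?tB (h z) b = ?tA z x \<and> ?tB b (h z) = ?tA x z"
      proof (cases "F = {}")
        case True
        obtain u where "u \<in> B" "?tB u u = ?tA x x" using R1[OF xA ss] by blast
        then show ?thesis using that True by blast
      next
        case False
        obtain y where y: "y \<in> F" "\<forall>z\<in>F. z \<noteq> y \<longrightarrow> lt z y" using lin_max[OF a.lin _ False] F by blast
        have yA: "y \<in> A" using FA[OF y(1)] .
        have yx: "lt y x" using FE[OF y(1)] by simp
        obtain u v where uv: "u \<in> B" "v \<in> B" "lt' u v" "?tB u v = ?tA y x" "?tB v u = ?tA x y"
          "?tB u u = ?tA y y" "?tB v v = ?tA x x" using R2[OF xA yA yx ss bs] by blast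
        have hyy: "?tB (h y) (h y) = ?tA y y" using h(3) y(1) by blast
        have "\<exists>g. bij_betw g B B \<and> (\<forall>x\<in>B. \<forall>y\<in>B. ?tB (g x) (g y) = ?tB x y) \<and> (\<forall>x\<in>{u}. g x = h y)"
          by (rule homD[OF b.homA]) (use uv hFB[OF y(1)] hyy in auto)
        then obtain g where g: "bij_betw g B B" "\<forall>x\<in>B. \<forall>y\<in>B. ?tB (g x) (g y) = ?tB x y" "g u = h y"
          by blast
        define b where "b = g v"
        have bB: "b \<in> B" unfolding b_def using g(1) uv(2) bij_betwE by blast
        have hyb: "?tB (h y) b = ?tA y x" using g(2) g(3) uv unfolding b_def by metis
        have bhy: "?tB b (h y) = ?tA x y" using g(2) g(3) uv unfolding b_def by metis
        have bbx: "?tB b b = ?tA x x" using g(2) uv unfolding b_def by metis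
        have ltyb: "lt' (h y) b" using hyb yx unfolding tpc_eq_iff by simp
        have bz: "?tB (h z) b = ?tA z x \<and> ?tB b (h z) = ?tA x z" if z: "z \<in> F" for z
        proof (cases "z = y")
          case True then show ?thesis using hyb bhy by simp
        next
          case False
          have zy: "lt z y" using y z False by blast
          have zA: "z \<in> A" using FA[OF z] .
          have zx: "lt z x" using FE[OF z] by simp
          have hzy: "?tB (h z) (h y) = ?tA z y" using h(3) z y(1) by blast
          have hzz: "?tB (h z) (h z) = ?tA z z" using h(3) z by blast
          have ltzy: "lt' (h z) (h y)" using hzy zy unfolding tpc_eq_iff by simp
          have ltzb: "lt' (h z) b" using lin_trans[OF b.lin hFB[OF z] hFB[OF y(1)] bB ltzy ltyb] .
          have adj: "Adj B lt' k (h z) b \<longleftrightarrow> Adj A lt k z x" for k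
            by (rule adj_comp[OF hFB[OF z] hFB[OF y(1)] bB ltzy ltyb zA yA xA zy yx])
              (use hzy hyb in \<open>simp_all add: tpc_eq_iff\<close>)
          have t1: "?tB (h z) b = ?tA z x"
            unfolding tpc_eq_iff using ltzb zx hzz adj unfolding tpc_eq_iff by simp
          have nbz: "\<not> lt' b (h z)" using lin_asym[OF b.lin hFB[OF z] bB ltzb] .
          have nxz: "\<not> lt x z" using lin_asym[OF a.lin zA xA zx] .
          have adj2: "Adj B lt' k b (h z) \<longleftrightarrow> Adj A lt k x z" for k
            using adj[of k] b.Adj_sym[of k b "h z"] a.Adj_sym[of k x z] by simp
          have t2: "?tB b (h z) = ?tA x z"
            unfolding tpc_eq_iff using nbz nxz bbx adj2 unfolding tpc_eq_iff by simp
          show ?thesis using t1 t2 by simp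
        qed
        show ?thesis using that[OF bB bbx] bz by blast
      qed
      have ltb: "lt' (h z) b" if "z \<in> F" for z
        using bF that FE[OF that] unfolding tpc_eq_iff by blast
      define h' where "h' = h(x := b)"
      have h'F: "h' z = h z" if "z \<in> F" for z using that EF unfolding h'_def by auto
      have h'x: "h' x = b" unfolding h'_def by simp
      show "\<exists>h. inj_on h E \<and> h ` E \<subseteq> B \<and> (\<forall>x\<in>E. \<forall>y\<in>E. ?tB (h x) (h y) = ?tA x y)"
      proof (intro exI conjI)
        show "inj_on h' E"
        proof (rule inj_onI)
          fix z w assume z: "z \<in> E" and w: "w \<in> E" and e: "h' z = h' w"
          show "z = w"
          proof (cases "z = x"; cases "w = x")
            assume "z = x" "w = x" then show ?thesis by simp
          next
            assume "z = x" "w \<noteq> x"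
            then have "w \<in> F" using w EF by auto
            then have "lt' (h' w) (h' z)" using ltb h'F h'x \<open>z = x\<close> by auto
            then show ?thesis using e lin_irr[OF b.lin bB] h'x \<open>z = x\<close> by auto
          next
            assume "z \<noteq> x" "w = x"
            then have "z \<in> F" using z EF by auto
            then have "lt' (h' z) (h' w)" using ltb h'F h'x \<open>w = x\<close> by auto
            then show ?thesis using e lin_irr[OF b.lin bB] h'x \<open>w = x\<close> by auto
          next
            assume "z \<noteq> x" "w \<noteq> x"
            then have "z \<in> F" "w \<in> F" using z w EF by auto
            then show ?thesis using e h'F h(1) inj_on_def by metis
          qed
        qed
        show "h' ` E \<subseteq> B" using EF h'F h'x bB hFB by auto
        show "\<forall>z\<in>E. \<forall>w\<in>E. ?tB (h' z) (h' w) = ?tA z w"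
        proof (intro ballI)
          fix z w assume z: "z \<in> E" and w: "w \<in> E"
          show "?tB (h' z) (h' w) = ?tA z w"
          proof (cases "z = x"; cases "w = x")
            assume "z = x" "w = x" then show ?thesis using h'x bb by simp
          next
            assume zx: "z = x" and wx: "w \<noteq> x"
            then have wF: "w \<in> F" using w EF by auto
            then show ?thesis using zx h'x h'F[OF wF] bF by simp
          next
            assume zx: "z \<noteq> x" and wx: "w = x"
            then have zF: "z \<in> F" using z EF by auto
            then show ?thesis using wx h'x h'F[OF zF] bF by simp
          next
            assume "z \<noteq> x" "w \<noteq> x"
            then have "z \<in> F" "w \<in> F" using z w EF by auto
            then show ?thesis using h(3) h'F by simp
          qed
        qed
      qed
    qed
  qed
  show ?thesis unfolding emb_all_def
  proof (intro allI impI)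
    fix E assume E: "finite E \<and> E \<subseteq> A"
    then have "finite E \<and> E \<subseteq> A \<and> card E = card E" by simp
    from main[of "card E", rule_format, OF this]
    show "\<exists>h. inj_on h E \<and> h ` E \<subseteq> B \<and> (\<forall>x\<in>E. \<forall>y\<in>E. ?tB (h x) (h y) = ?tA x y)" .
  qed
qed

end


lemma oiso_sz: "oiso A lt B lt' f \<Longrightarrow> x \<in> A \<Longrightarrow> sz B lt' (f x) = sz A lt x"
  unfolding sz_def using oiso_cls oiso_card_img cls_sub by metis

lemma oiso_data:
  assumes f: "oiso A lt B lt' f"
  shows "szset A lt = szset B lt'" "bdat A lt = bdat B lt'"
proof -
  have fB: "f ` A = B" using f unfolding oiso_def bij_betw_def by auto
  show "szset A lt = szset B lt'" unfolding szset_def using oiso_sz[OF f] fB by force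
  show "bdat A lt = bdat B lt'"
  proof
    show "bdat A lt \<subseteq> bdat B lt'"
    proof
      fix c assume "c \<in> bdat A lt"
      then obtain x y where xy: "x \<in> A" "y \<in> A" "lt x y" "\<not> sim1 A lt x y" "c = (sz A lt x, sz A lt y)"
        unfolding bdat_def by blast
      then have "f x \<in> B" "f y \<in> B" "lt' (f x) (f y)" "\<not> sim1 B lt' (f x) (f y)" "c = (sz B lt' (f x), sz B lt' (f y))"
        using oiso_in[OF f] oiso_lt[OF f] oiso_sim1[OF f] oiso_sz[OF f] by auto
      then show "c \<in> bdat B lt'" unfolding bdat_def by blast
    qed
    show "bdat B lt' \<subseteq> bdat A lt"
    proof
      fix c assume "c \<in> bdat B lt'"
      then obtain x' y' where xy: "x' \<in> B" "y' \<in> B" "lt' x' y'" "\<not> sim1 B lt' x' y'" "c = (sz B lt' x', sz B lt' y')"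
        unfolding bdat_def by blast
      obtain x where x: "x \<in> A" "x' = f x" using xy(1) fB by blast
      obtain y where y: "y \<in> A" "y' = f y" using xy(2) fB by blast
      have "lt x y" "\<not> sim1 A lt x y" "c = (sz A lt x, sz A lt y)"
        using xy x y oiso_lt[OF f] oiso_sim1[OF f] oiso_sz[OF f] by auto
      then show "c \<in> bdat A lt" unfolding bdat_def using x y by blast
    qed
  qed
qed

definition Dl :: "nat set \<times> (nat \<Rightarrow> nat \<Rightarrow> bool) \<Rightarrow> nat set \<times> (nat \<times> nat) set" where
  "Dl X = (szset (fst X) (snd X), bdat (fst X) (snd X))"

lemma CNM_orders_cnm: "X \<in> CNM_orders n m \<longleftrightarrow> cnm n m (fst X) (snd X)"
  unfolding CNM_orders_def cnm_def by (cases X) auto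

lemma cnm_iso_iff:
  assumes "X \<in> CNM_orders n m" "Y \<in> CNM_orders n m"
  shows "order_iso X Y \<longleftrightarrow> Dl X = Dl Y"
proof -
  obtain A lt where X: "X = (A, lt)" by (cases X)
  obtain B lt' where Y: "Y = (B, lt')" by (cases Y)
  have cA: "cnm n m A lt" and cB: "cnm n m B lt'" using assms X Y CNM_orders_cnm by auto
  interpret ab: cnm2 n m A lt B lt' using cA cB unfolding cnm2_def by blast
  interpret ba: cnm2 n m B lt' A lt using cA cB unfolding cnm2_def by blast
  show ?thesis
  proof
    assume "order_iso X Y"
    then have "oiso A lt B lt' f" if "bij_betw f A B \<and> (\<forall>x\<in>A. \<forall>y\<in>A. lt x y \<longleftrightarrow> lt' (f x) (f y))" for f
      using that unfolding oiso_def by blast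
    then obtain f where "oiso A lt B lt' f" using \<open>order_iso X Y\<close> unfolding order_iso_def X Y by auto
    then show "Dl X = Dl Y" unfolding Dl_def X Y using oiso_data by simp
  next
    assume "Dl X = Dl Y"
    then have e: "szset A lt = szset B lt'" "bdat A lt = bdat B lt'" unfolding Dl_def X Y by auto
    have e1: "emb_all A (tpc n m A lt) B (tpc n m B lt')" using ab.emb e by simp
    have e2: "emb_all B (tpc n m B lt') A (tpc n m A lt)" using ba.emb e by simp
    obtain f where f: "bij_betw f A B" "\<forall>x\<in>A. \<forall>y\<in>A. tpc n m B lt' (f x) (f y) = tpc n m A lt x y"
      using bnf_iso[OF ab.a.homA ab.b.homA e1 e2] by blast
    have "\<forall>x\<in>A. \<forall>y\<in>A. lt x y \<longleftrightarrow> lt' (f x) (f y)" using f(2) unfolding tpc_eq_iff by metis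
    then show "order_iso X Y" unfolding order_iso_def X Y using f(1) by auto
  qed
qed

context cnm
begin

lemma sz_pos1: "x \<in> A \<Longrightarrow> 1 \<le> sz A lt x"
  using pos_lt_sz by fastforce

lemma szset_sub: "szset A lt \<subseteq> {1..n+m+1}"
  unfolding szset_def using sz_pos1 sz_bound by auto

lemma bdat_sub: "bdat A lt \<subseteq> szset A lt \<times> szset A lt"
  unfolding bdat_def szset_def by auto

lemma oiso_self_sz: "oiso A lt A lt g \<Longrightarrow> x \<in> A \<Longrightarrow> sz A lt (g x) = sz A lt x"
  using oiso_sz by blast

lemma bdat_trans:
  assumes "(N1, N2) \<in> bdat A lt" "(N2, N3) \<in> bdat A lt"
  shows "(N1, N3) \<in> bdat A lt"
proof -
  obtain x1 y1 where 1: "x1 \<in> A" "y1 \<in> A" "lt x1 y1" "\<not> sim1 A lt x1 y1" "N1 = sz A lt x1" "N2 = sz A lt y1"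
    using assms(1) unfolding bdat_def by blast
  obtain x2 y2 where 2: "x2 \<in> A" "y2 \<in> A" "lt x2 y2" "\<not> sim1 A lt x2 y2" "N2 = sz A lt x2" "N3 = sz A lt y2"
    using assms(2) unfolding bdat_def by blast
  have "pos A lt x2 < sz A lt y1" using pos_lt_sz[OF 2(1)] 1(6) 2(5) by simp
  then obtain y1' where y1': "y1' \<in> cls A lt y1" "pos A lt y1' = pos A lt x2" using pos_exists[OF 1(2)] by blast
  have y1'A: "y1' \<in> A" using cls_A[OF y1'(1)] .
  have szy1': "sz A lt y1' = sz A lt x2" using sz_same[OF 1(2) y1'(1)] 1(6) 2(5) by simp
  have "tp x2 x2 = tp y1' y1'" using tp_diag[OF 2(1)] tp_diag[OF y1'A] szy1' y1'(2) by simp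
  then obtain g where g: "oiso A lt A lt g" "g x2 = y1'" using aut1[OF 2(1) y1'A] by blast
  define z where "z = g y2"
  have zA: "z \<in> A" unfolding z_def using oiso_in[OF g(1) 2(2)] .
  have y1z: "lt y1' z" unfolding z_def using oiso_lt[OF g(1) 2(1) 2(2)] 2(3) g(2) by simp
  have ny1z: "\<not> sim1 A lt y1' z" unfolding z_def using oiso_sim1[OF g(1) 2(1) 2(2)] 2(4) g(2) by simp
  have szz: "sz A lt z = N3" unfolding z_def using oiso_sz[OF g(1) 2(2)] 2(6) by simp
  have o: "lt x1 y1'" "\<not> sim1 A lt x1 y1'"
    using diff_cls_order[OF 1(1-4) self_cls[OF 1(1)] y1'(1)] by auto
  have x1z: "lt x1 z" using lin_trans[OF lin 1(1) y1'A zA o(1) y1z] .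
  have nx1z: "\<not> sim1 A lt x1 z"
  proof
    assume "sim1 A lt x1 z"
    then have "sim1 A lt x1 y1'" using sim1_conv(1)[OF lin 1(1) y1'A zA o(1) y1z] by blast
    then show False using o(2) by simp
  qed
  show ?thesis unfolding bdat_def using 1(1) zA x1z nx1z 1(5) szz by blast
qed

lemma bdat_total:
  assumes "N1 \<in> szset A lt" "N2 \<in> szset A lt" "N1 \<noteq> N2"
  shows "(N1, N2) \<in> bdat A lt \<or> (N2, N1) \<in> bdat A lt"
proof -
  obtain x y where xy: "x \<in> A" "y \<in> A" "N1 = sz A lt x" "N2 = sz A lt y" using assms unfolding szset_def by blast
  have ns: "\<not> sim1 A lt x y"
  proof
    assume "sim1 A lt x y"
    then have "y \<in> cls A lt x" using xy unfolding cls_def by blast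
    then show False using sz_same[OF xy(1)] xy assms(3) by simp
  qed
  have "x \<noteq> y" using xy assms(3) by auto
  then have "lt x y \<or> lt y x" using lin_total[OF lin xy(1,2)] by blast
  then show ?thesis unfolding bdat_def using xy ns sim1_sym by blast
qed

lemma big_unique:
  assumes "N1 \<in> szset A lt" "N2 \<in> szset A lt" "min n m < N1" "min n m < N2"
  shows "N1 = N2"
proof -
  obtain x1 where x1: "x1 \<in> A" "N1 = sz A lt x1" using assms unfolding szset_def by blast
  obtain x2 where x2: "x2 \<in> A" "N2 = sz A lt x2" using assms unfolding szset_def by blast
  have b1: "N1 \<le> n + m + 1" "N2 \<le> n + m + 1" using sz_bound x1 x2 by auto
  consider "n = 0 \<and> m = 0" | "m \<le> n \<and> 1 \<le> n" | "n < m" by linarith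
  then show ?thesis
  proof cases
    case 1 then show ?thesis using b1 assms(3,4) by simp
  next
    case 2
    obtain u1 where u1: "u1 \<in> cls A lt x1" "pos A lt u1 = N1 - 1" using pos_exists[OF x1(1), of "N1 - 1"] x1 sz_pos1[OF x1(1)] by auto
    obtain u2 where u2: "u2 \<in> cls A lt x2" "pos A lt u2 = N2 - 1" using pos_exists[OF x2(1), of "N2 - 1"] x2 sz_pos1[OF x2(1)] by auto
    have uA: "u1 \<in> A" "u2 \<in> A" using u1 u2 cls_A by auto
    have su: "sz A lt u1 = N1" "sz A lt u2 = N2" using sz_same x1 x2 u1 u2 by auto
    have "tp u1 u1 = tp u2 u2"
      using tp_diag[OF uA(1)] tp_diag[OF uA(2)] su u1(2) u2(2) 2 assms(3,4) by (auto simp: fun_eq_iff)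
    then show ?thesis using same_tp(1)[OF uA] su by simp
  next
    case 3
    obtain u1 where u1: "u1 \<in> cls A lt x1" "pos A lt u1 = 0" using pos_exists[OF x1(1), of 0] x1 sz_pos1[OF x1(1)] by auto
    obtain u2 where u2: "u2 \<in> cls A lt x2" "pos A lt u2 = 0" using pos_exists[OF x2(1), of 0] x2 sz_pos1[OF x2(1)] by auto
    have uA: "u1 \<in> A" "u2 \<in> A" using u1 u2 cls_A by auto
    have su: "sz A lt u1 = N1" "sz A lt u2 = N2" using sz_same x1 x2 u1 u2 by auto
    have "tp u1 u1 = tp u2 u2"
      using tp_diag[OF uA(1)] tp_diag[OF uA(2)] su u1(2) u2(2) 3 assms(3,4) by (auto simp: fun_eq_iff)
    then show ?thesis using same_tp(1)[OF uA] su by simp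
  qed
qed

lemma szset_card: "card (szset A lt) \<le> min n m + 1"
proof -
  let ?S = "szset A lt"
  have fin: "finite ?S" using szset_sub finite_subset by blast
  have "?S \<subseteq> {1..min n m} \<union> {N \<in> ?S. min n m < N}"
  proof
    fix N assume N: "N \<in> ?S"
    then have "1 \<le> N" using szset_sub by auto
    then show "N \<in> {1..min n m} \<union> {N \<in> ?S. min n m < N}" using N by (cases "N \<le> min n m") auto
  qed
  moreover have "card {N \<in> ?S. min n m < N} \<le> 1"
  proof -
    have f2: "finite {N \<in> ?S. min n m < N}" using fin by simp
    have "\<forall>a1\<in>{N \<in> ?S. min n m < N}. \<forall>a2\<in>{N \<in> ?S. min n m < N}. a1 = a2"
      using big_unique by blast
    then show ?thesis using card_le_Suc0_iff_eq[OF f2] by simp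
  qed
  ultimately have "card ?S \<le> card ({1..min n m} \<union> {N \<in> ?S. min n m < N})"
    by (intro card_mono) (use fin in auto)
  also have "\<dots> \<le> card {1..min n m} + card {N \<in> ?S. min n m < N}" by (rule card_Un_le)
  finally show ?thesis using \<open>card {N \<in> ?S. min n m < N} \<le> 1\<close> by simp
qed

end


definition Bof :: "nat set \<Rightarrow> (nat \<Rightarrow> nat) \<Rightarrow> (nat \<Rightarrow> bool) \<Rightarrow> (nat \<times> nat) set" where
  "Bof T r f = {(d, c). d \<in> T \<and> c \<in> T \<and> (r d < r c \<or> (r d = r c \<and> (d = c \<longrightarrow> f c)))}"

lemma Bof_restrict: "Bof T (restrict r T) (restrict f T) = Bof T r f"
  unfolding Bof_def by auto

lemma Bof_repr:
  assumes fin: "finite T" and sub: "Bd \<subseteq> T \<times> T"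
    and tr: "\<And>a b c. (a,b) \<in> Bd \<Longrightarrow> (b,c) \<in> Bd \<Longrightarrow> (a,c) \<in> Bd"
    and tot: "\<And>c d. c \<in> T \<Longrightarrow> d \<in> T \<Longrightarrow> c \<noteq> d \<Longrightarrow> (c,d) \<in> Bd \<or> (d,c) \<in> Bd"
  defines "SP \<equiv> \<lambda>c. {d\<in>T. (d,c) \<in> Bd \<and> (c,d) \<notin> Bd}"
  shows "Bd = Bof T (\<lambda>c. card (SP c)) (\<lambda>c. (c,c) \<in> Bd)" and "\<And>c. c \<in> T \<Longrightarrow> card (SP c) < card T"
proof -
  have finSP: "finite (SP c)" for c unfolding SP_def using fin by simp
  have strict: "card (SP d) < card (SP c)" if "(d,c) \<in> Bd" "(c,d) \<notin> Bd" for c d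
  proof -
    have "SP d \<subseteq> SP c"
    proof
      fix e assume "e \<in> SP d"
      then have e: "e \<in> T" "(e,d) \<in> Bd" "(d,e) \<notin> Bd" unfolding SP_def by auto
      have "(e,c) \<in> Bd" using tr[OF e(2) that(1)] .
      moreover have "(c,e) \<notin> Bd" using tr[of c e d] e(2) that(2) by blast
      ultimately show "e \<in> SP c" unfolding SP_def using e(1) by blast
    qed
    moreover have "d \<in> SP c" "d \<notin> SP d" unfolding SP_def using that sub by auto
    ultimately have "SP d \<subset> SP c" by blast
    then show ?thesis using psubset_card_mono[OF finSP] by blast
  qed
  have eq: "card (SP d) = card (SP c)" if "(d,c) \<in> Bd" "(c,d) \<in> Bd" for c d
  proof -
    have "SP d = SP c"
    proof
      show "SP d \<subseteq> SP c"
      proof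
        fix e assume "e \<in> SP d"
        then have e: "e \<in> T" "(e,d) \<in> Bd" "(d,e) \<notin> Bd" unfolding SP_def by auto
        have "(e,c) \<in> Bd" using tr[OF e(2) that(1)] .
        moreover have "(c,e) \<notin> Bd" using tr[of d c e] e(3) that(1) by blast
        ultimately show "e \<in> SP c" unfolding SP_def using e(1) by blast
      qed
      show "SP c \<subseteq> SP d"
      proof
        fix e assume "e \<in> SP c"
        then have e: "e \<in> T" "(e,c) \<in> Bd" "(c,e) \<notin> Bd" unfolding SP_def by auto
        have "(e,d) \<in> Bd" using tr[OF e(2) that(2)] .
        moreover have "(d,e) \<notin> Bd" using tr[of c d e] e(3) that(2) by blast
        ultimately show "e \<in> SP d" unfolding SP_def using e(1) by blast
      qed
    qed
    then show ?thesis by simp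
  qed
  show "Bd = Bof T (\<lambda>c. card (SP c)) (\<lambda>c. (c,c) \<in> Bd)"
  proof
    show "Bd \<subseteq> Bof T (\<lambda>c. card (SP c)) (\<lambda>c. (c,c) \<in> Bd)"
    proof
      fix p assume p: "p \<in> Bd"
      obtain d c where dc: "p = (d, c)" by (cases p)
      have dcT: "d \<in> T" "c \<in> T" using p dc sub by auto
      show "p \<in> Bof T (\<lambda>c. card (SP c)) (\<lambda>c. (c,c) \<in> Bd)"
      proof (cases "(c,d) \<in> Bd")
        case True
        then show ?thesis unfolding Bof_def dc using eq[of d c] p dc dcT by auto
      next
        case False
        then show ?thesis unfolding Bof_def dc using strict[of d c] p dc dcT by auto
      qed
    qed
    show "Bof T (\<lambda>c. card (SP c)) (\<lambda>c. (c,c) \<in> Bd) \<subseteq> Bd"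
    proof
      fix p assume p: "p \<in> Bof T (\<lambda>c. card (SP c)) (\<lambda>c. (c,c) \<in> Bd)"
      obtain d c where dc: "p = (d, c)" by (cases p)
      have h: "d \<in> T" "c \<in> T" "card (SP d) < card (SP c) \<or> (card (SP d) = card (SP c) \<and> (d = c \<longrightarrow> (c,c) \<in> Bd))"
        using p dc unfolding Bof_def by auto
      show "p \<in> Bd"
      proof (rule ccontr)
        assume np: "p \<notin> Bd"
        show False
        proof (cases "d = c")
          case True
          then show False using h np dc by auto
        next
          case False
          then have "(c,d) \<in> Bd" using tot[OF h(1,2) False] np dc by auto
          then have "card (SP c) < card (SP d)" using strict[of c d] np dc by auto
          then show False using h by auto
        qed
      qed
    qed
  qed
  show "card (SP c) < card T" if "c \<in> T" for c
  proof -
    have "SP c \<subseteq> T - {c}" unfolding SP_def by auto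
    then have "card (SP c) \<le> card (T - {c})" using fin by (intro card_mono) auto
    also have "\<dots> < card T"
    proof -
      have "card T > 0" using that fin card_gt_0_iff by blast
      moreover have "card (T - {c}) = card T - 1" using that fin by simp
      ultimately show ?thesis by simp
    qed
    finally show ?thesis .
  qed
qed

definition TT :: "nat \<Rightarrow> nat \<Rightarrow> nat set set" where
  "TT n m = {T. T \<subseteq> {1..n+m+1} \<and> card T \<le> min n m + 1}"

definition Dset :: "nat \<Rightarrow> nat \<Rightarrow> (nat set \<times> (nat \<times> nat) set) set" where
  "Dset n m = (\<lambda>(T, r, f). (T, Bof T r f)) ` (SIGMA T:TT n m. (T \<rightarrow>\<^sub>E {..<min n m + 1}) \<times> (T \<rightarrow>\<^sub>E (UNIV :: bool set)))"

lemma Dl_in: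
  assumes X: "X \<in> CNM_orders n m"
  shows "Dl X \<in> Dset n m"
proof -
  obtain A lt where XA: "X = (A, lt)" by (cases X)
  interpret cnm n m A lt using X XA CNM_orders_cnm by auto
  let ?T = "szset A lt" and ?Bd = "bdat A lt"
  have finT: "finite ?T" using szset_sub finite_subset by blast
  define SP where "SP = (\<lambda>c. {d\<in>?T. (d,c) \<in> ?Bd \<and> (c,d) \<notin> ?Bd})"
  have rep: "?Bd = Bof ?T (\<lambda>c. card (SP c)) (\<lambda>c. (c,c) \<in> ?Bd)" and rlt: "\<And>c. c \<in> ?T \<Longrightarrow> card (SP c) < card ?T"
    unfolding SP_def by (rule Bof_repr[OF finT bdat_sub bdat_trans bdat_total], assumption+)+
  define r where "r = restrict (\<lambda>c. card (SP c)) ?T"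
  define f where "f = restrict (\<lambda>c. (c,c) \<in> ?Bd) ?T"
  have TTin: "?T \<in> TT n m" unfolding TT_def using szset_sub szset_card by auto
  have r: "r \<in> ?T \<rightarrow>\<^sub>E {..<min n m + 1}" unfolding r_def using rlt szset_card by fastforce
  have f: "f \<in> ?T \<rightarrow>\<^sub>E (UNIV :: bool set)" unfolding f_def by auto
  have "Dl X = (\<lambda>(T, r, f). (T, Bof T r f)) (?T, r, f)"
    unfolding Dl_def XA r_def f_def
    using rep Bof_restrict[of "szset A lt" "\<lambda>c. card (SP c)" "\<lambda>c. (c,c) \<in> bdat A lt"] by simp
  moreover have "(?T, r, f) \<in> (SIGMA T:TT n m. (T \<rightarrow>\<^sub>E {..<min n m + 1}) \<times> (T \<rightarrow>\<^sub>E (UNIV :: bool set)))"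
    using TTin r f by blast
  ultimately show ?thesis unfolding Dset_def by blast
qed

lemma TT_fin: "finite (TT n m)"
  unfolding TT_def by (rule finite_subset[of _ "Pow {1..n+m+1}"]) auto

lemma TT_card: "card (TT n m) \<le> 2 ^ (n + m + 1)"
proof -
  have "card (TT n m) \<le> card (Pow {1..n+m+1})" unfolding TT_def by (rule card_mono) auto
  then show ?thesis by (simp add: card_Pow)
qed

lemma Dset_card:
  "finite (Dset n m) \<and> card (Dset n m) \<le> 2 ^ (n + m + 1) * (min n m + 1) ^ (min n m + 1) * 2 ^ (min n m + 1)"
proof -
  let ?J = "min n m + 1"
  let ?S = "SIGMA T:TT n m. (T \<rightarrow>\<^sub>E {..<?J}) \<times> (T \<rightarrow>\<^sub>E (UNIV :: bool set))"
  have finT: "T \<in> TT n m \<Longrightarrow> finite T" for T unfolding TT_def using finite_subset by blast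
  have cardT: "T \<in> TT n m \<Longrightarrow> card T \<le> ?J" for T unfolding TT_def by auto
  have fin2: "finite ((T \<rightarrow>\<^sub>E {..<?J}) \<times> (T \<rightarrow>\<^sub>E (UNIV :: bool set)))" if "T \<in> TT n m" for T
    using finT[OF that] by (simp add: finite_PiE)
  have finS: "finite ?S" by (rule finite_SigmaI[OF TT_fin]) (rule fin2)
  have c2: "card ((T \<rightarrow>\<^sub>E {..<?J}) \<times> (T \<rightarrow>\<^sub>E (UNIV :: bool set))) \<le> ?J ^ ?J * 2 ^ ?J" if "T \<in> TT n m" for T
  proof -
    have "card ((T \<rightarrow>\<^sub>E {..<?J}) \<times> (T \<rightarrow>\<^sub>E (UNIV :: bool set))) = ?J ^ card T * 2 ^ card T"
      using finT[OF that] by (simp add: card_cartesian_product card_PiE)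
    also have "\<dots> \<le> ?J ^ ?J * 2 ^ ?J"
      using cardT[OF that] by (intro mult_mono power_increasing) auto
    finally show ?thesis .
  qed
  have "card ?S = (\<Sum>T\<in>TT n m. card ((T \<rightarrow>\<^sub>E {..<?J}) \<times> (T \<rightarrow>\<^sub>E (UNIV :: bool set))))"
    using TT_fin fin2 by (simp add: card_SigmaI)
  also have "\<dots> \<le> (\<Sum>T\<in>TT n m. ?J ^ ?J * 2 ^ ?J)" using c2 by (rule sum_mono)
  also have "\<dots> = card (TT n m) * (?J ^ ?J * 2 ^ ?J)" by simp
  also have "\<dots> \<le> 2 ^ (n + m + 1) * (?J ^ ?J * 2 ^ ?J)" using TT_card by simp
  finally have cs: "card ?S \<le> 2 ^ (n + m + 1) * ?J ^ ?J * 2 ^ ?J" by (simp add: mult.assoc)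
  have "card (Dset n m) \<le> card ?S" unfolding Dset_def using finS by (rule card_image_le)
  moreover have "finite (Dset n m)" unfolding Dset_def using finS by simp
  ultimately show ?thesis using cs by simp
qed

theorem CNM_finite_bound:
  "finite (CNM_classes n m) \<and> I_count n m \<le> 2 ^ (n + m + 1) * (min n m + 1) ^ (min n m + 1) * 2 ^ (min n m + 1)"
proof -
  have sub: "Dl ` CNM_orders n m \<subseteq> Dset n m" using Dl_in by blast
  have fD: "finite (Dl ` CNM_orders n m)" using Dset_card finite_subset[OF sub] by blast
  have fin: "finite (CNM_classes n m)" unfolding CNM_classes_def
    by (rule classes_finite[OF _ fD]) (rule cnm_iso_iff)
  have "I_count n m = card (Dl ` CNM_orders n m)" unfolding I_count_def
    by (rule classes_card) (rule cnm_iso_iff)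
  also have "\<dots> \<le> card (Dset n m)" using sub Dset_card by (intro card_mono) auto
  finally have "I_count n m \<le> card (Dset n m)" .
  then show ?thesis using fin Dset_card[of n m] by linarith
qed


lemma fact_mult_pow: "fact a * (a + 1) ^ b \<le> (fact (a + b) :: nat)"
proof (induction b)
  case 0
  then show ?case by simp
next
  case (Suc b)
  have "fact a * (a + 1) ^ Suc b = (a + 1) * (fact a * (a + 1) ^ b)" by (simp add: algebra_simps)
  also have "\<dots> \<le> (a + b + 1) * fact (a + b)" using Suc.IH by (intro mult_mono) auto
  also have "\<dots> = fact (a + Suc b)" by (simp add: algebra_simps)
  finally show ?case .
qed

lemma exp8_small:
  assumes "(e::real) > 0"
  shows "\<exists>H. \<forall>j\<ge>H. 8 ^ j / fact j < e"
proof -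
  have "summable (\<lambda>j. inverse (fact j) * (8::real) ^ j)" by (rule summable_exp)
  then have "(\<lambda>j. inverse (fact j) * (8::real) ^ j) \<longlonglongrightarrow> 0" by (rule summable_LIMSEQ_zero)
  then have "eventually (\<lambda>j. inverse (fact j) * (8::real) ^ j < e) sequentially"
    using assms by (rule order_tendstoD)
  then obtain H where "\<forall>j\<ge>H. inverse (fact j) * (8::real) ^ j < e" unfolding eventually_sequentially by blast
  then show ?thesis by (auto simp: field_simps)
qed

lemma ratio_small:
  assumes "(e::real) > 0"
  shows "\<exists>K. \<forall>n m. n + m + 1 \<ge> K \<longrightarrow> real (I_count n m) < e * fact (n + m + 1)"
proof -
  obtain H where H: "\<forall>j\<ge>H. 8 ^ j / fact j < e / 8" using exp8_small[of "e / 8"] assms by auto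
  show ?thesis
  proof (intro exI allI impI)
    fix n m :: nat assume K: "2 * H + 2 \<le> n + m + 1"
    define k where "k = n + m + 1"
    define h where "h = (n + m + 2) div 2"
    define J where "J = min n m + 1"
    have Jh: "J \<le> h" "1 \<le> J" unfolding J_def h_def by auto
    have kh: "k \<le> 2 * h" "2 * h \<le> k + 1" unfolding k_def h_def by auto
    have hH: "H \<le> h - 1" "1 \<le> h" using K unfolding h_def by auto
    have I1: "I_count n m \<le> 2 ^ k * J ^ J * 2 ^ J" using CNM_finite_bound[of n m] unfolding k_def J_def by simp
    have "(2::nat) ^ k * J ^ J * 2 ^ J \<le> 2 ^ (2 * h) * h ^ h * 2 ^ h"
    proof -
      have "J ^ J \<le> h ^ J" using Jh by (simp add: power_mono)
      also have "\<dots> \<le> h ^ h" using Jh by (intro power_increasing) auto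
      finally have a: "J ^ J \<le> h ^ h" .
      have b: "(2::nat) ^ k \<le> 2 ^ (2 * h)" using kh by (intro power_increasing) auto
      have c: "(2::nat) ^ J \<le> 2 ^ h" using Jh by (intro power_increasing) auto
      show ?thesis using a b c by (intro mult_mono) auto
    qed
    also have "(2::nat) ^ (2 * h) * h ^ h * 2 ^ h = 8 ^ h * h ^ h"
    proof -
      have "(2::nat) ^ (2 * h) * 2 ^ h = 2 ^ (2 * h + h)" by (simp only: power_add)
      also have "\<dots> = 2 ^ (3 * h)" by simp
      also have "(2::nat) ^ (3 * h) = (2 ^ 3) ^ h" by (simp add: power_mult)
      finally have "(2::nat) ^ (2 * h) * 2 ^ h = 8 ^ h" by simp
      then show ?thesis by (metis mult.commute mult.left_commute)
    qed
    finally have I2: "I_count n m \<le> 8 ^ h * h ^ h" using I1 by linarith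
    have F: "fact (h - 1) * h ^ h \<le> (fact k :: nat)"
    proof -
      have "fact (h - 1) * ((h - 1) + 1) ^ h \<le> (fact ((h - 1) + h) :: nat)" by (rule fact_mult_pow)
      moreover have "(h - 1) + 1 = h" using hH by simp
      moreover have "fact ((h - 1) + h) \<le> (fact k :: nat)" using kh hH by (intro fact_mono) auto
      ultimately show ?thesis by simp
    qed
    have s: "8 ^ (h - 1) / fact (h - 1) < e / 8" using H hH by auto
    then have s2: "(8::real) ^ h < e * fact (h - 1)"
    proof -
      have "(8::real) ^ h = 8 * 8 ^ (h - 1)" using hH by (metis One_nat_def Suc_pred' less_eq_Suc_le power_Suc)
      moreover have "(8::real) ^ (h - 1) < e / 8 * fact (h - 1)" using s by (simp add: field_simps)
      ultimately show ?thesis by simp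
    qed
    have hp: "(0::real) < real h ^ h" using hH by simp
    have "real (I_count n m) \<le> real (8 ^ h * h ^ h)" using I2 by (simp only: of_nat_le_iff)
    also have "real (8 ^ h * h ^ h) = 8 ^ h * real h ^ h" by simp
    also have "\<dots> < e * fact (h - 1) * real h ^ h" using s2 hp by (intro mult_strict_right_mono) auto
    also have "\<dots> \<le> e * fact k"
    proof -
      have "real (fact (h - 1) * h ^ h) \<le> real (fact k)" using F by (simp only: of_nat_le_iff)
      then have "fact (h - 1) * real h ^ h \<le> (fact k :: real)" by simp
      then show ?thesis using assms by (simp add: mult.assoc)
    qed
    finally show "real (I_count n m) < e * fact (n + m + 1)" unfolding k_def .
  qed
qed

theorem mainTheorem10:
  shows "(\<forall>n m. finite (CNM_classes n m)) \<and> (\<forall>k. finite (colored_classes k)) \<and>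
    (\<exists>C::real. \<exists>K::nat. \<forall>n m. n + m + 1 \<ge> K \<longrightarrow>
        real (I_count n m) \<le> C * fact (n + m + 1) * (2.123::real) ^ (n + m + 1)) \<and>
    (\<forall>\<epsilon>>0::real. \<exists>K::nat. \<forall>n m. n + m + 1 \<ge> K \<longrightarrow>
        real (I_count n m) / real (L_count (n + m + 1)) < \<epsilon>)"
proof (intro conjI allI impI)
  fix n m show "finite (CNM_classes n m)" using CNM_finite_bound by blast
next
  fix k show "finite (colored_classes k)" by (rule colored_finite)
next
  obtain K where K: "\<forall>n m. n + m + 1 \<ge> K \<longrightarrow> real (I_count n m) < 1 * fact (n + m + 1)"
    using ratio_small[of 1] by auto
  have "real (I_count n m) \<le> 1 * fact (n + m + 1) * (2.123::real) ^ (n + m + 1)" if "n + m + 1 \<ge> K" for n m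
  proof -
    have "real (I_count n m) < fact (n + m + 1)" using K that by simp
    also have "(fact (n + m + 1) :: real) \<le> fact (n + m + 1) * (2.123::real) ^ (n + m + 1)"
    proof -
      have "(1::real) \<le> 2.123 ^ (n + m + 1)" by (rule one_le_power) simp
      then have "(fact (n + m + 1) :: real) * 1 \<le> fact (n + m + 1) * 2.123 ^ (n + m + 1)"
        by (intro mult_left_mono) auto
      then show ?thesis by simp
    qed
    finally show ?thesis by simp
  qed
  then show "\<exists>C::real. \<exists>K::nat. \<forall>n m. n + m + 1 \<ge> K \<longrightarrow>
        real (I_count n m) \<le> C * fact (n + m + 1) * (2.123::real) ^ (n + m + 1)" by blast
next
  fix e :: real assume e: "e > 0"
  obtain K where K: "\<forall>n m. n + m + 1 \<ge> K \<longrightarrow> real (I_count n m) < e * fact (n + m + 1)"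
    using ratio_small[OF e] by auto
  have "real (I_count n m) / real (L_count (n + m + 1)) < e" if "n + m + 1 \<ge> K" for n m
  proof -
    have L: "(fact (n + m + 1) :: real) \<le> real (L_count (n + m + 1))"
      using L_ge[of "n + m + 1"] by (metis of_nat_fact of_nat_le_iff)
    have fp: "(0::real) < fact (n + m + 1)" by simp
    have "real (I_count n m) / real (L_count (n + m + 1)) \<le> real (I_count n m) / fact (n + m + 1)"
    proof (rule divide_left_mono[OF L])
      have Lp: "(0::real) < real (L_count (n + m + 1))" using L fp by linarith
      show "0 < real (L_count (n + m + 1)) * fact (n + m + 1)" using Lp fp by (rule mult_pos_pos)
    qed simp
    also have "\<dots> < e" using K that fp by (simp add: divide_less_eq)
    finally show ?thesis .
  qed
  then show "\<exists>K::nat. \<forall>n m. n + m + 1 \<ge> K \<longrightarrow> real (I_count n m) / real (L_count (n + m + 1)) < e" by blast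
qed

end
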